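(* (1) For each triple of integers $k,q,h>0$ there exists a homogeneous polynomial $P_{k,q,h}(Z_2,Z_3,\ldots)$ of degree $k$ (where $Z_j$ has degree $j$), independent of $N$, such that for every integer $N>0$ \[ \sum_{({\boldsymbol{k}};l)\in \tilde{I}_0(k,q,h)}\tilde{\zeta}^{(N)}({\boldsymbol{k}};l)=P_{k,q,h}(\zeta^{(N)}(2),\zeta^{(N)}(3),\ldots). \] (2) For all integers $N,k,q,h>0$, \[ \sum_{({\boldsymbol{k}};l)\in \tilde{I}_0(k,q,h)}\tilde{\zeta}^{(N)}({\boldsymbol{k}};l)=\sum_{({\boldsymbol{k}};l)\in \tilde{I}_0(k,k-q,h)}\tilde{\zeta}^{(N)}({\boldsymbol{k}};l). \]
   Context: $\zeta^{(N)}(k)=\sum_{n=1}^{N-1}n^{-k}$. For $(k_1,\ldots,k_r)\in\mathbb{Z}_{>0}^r$ and integer $l\ge0$, \[ \tilde{\zeta}^{(N)}(k_1,\ldots,k_r;l)=\sum_{0<m_1<\cdots<m_r<N}\frac{1}{m_1^{k_1}\cdots m_r^{k_r}}\sum_{0<n_1\le\cdots\le n_l\le m_r}\frac{1}{(N-n_1)\cdots(N-n_l)} \] (the inner sum is $1$ when $l=0$), and $\tilde{I}_0(k,q,h)$ is the set of $(k_1,\ldots,k_r;l)\in\mathbb{Z}_{>0}^r\times\mathbb{Z}_{\ge0}$ with $r>0$, $k_r>1$, $k_1+\cdots+k_r+l=k$, $r+l=q$, $\#\{i\mid k_i>1\}=h$ (empty sums are $0$). *)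

theory Defs
  imports Complex_Main
begin

definition zetaN :: "nat \<Rightarrow> nat \<Rightarrow> real" where
  "zetaN N k = (\<Sum>n\<in>{1..<N}. 1 / real n ^ k)"

definition incr_tuples :: "nat \<Rightarrow> nat \<Rightarrow> nat list set" where
  "incr_tuples N r = {ms. length ms = r \<and> sorted_wrt (<) ms \<and> set ms \<subseteq> {1..<N}}"

definition weak_tuples :: "nat \<Rightarrow> nat \<Rightarrow> nat list set" where
  "weak_tuples M l = {ns. length ns = l \<and> sorted ns \<and> set ns \<subseteq> {1..M}}"

definition tzetaN :: "nat \<Rightarrow> nat list \<Rightarrow> nat \<Rightarrow> real" where
  "tzetaN N ks l =
     (\<Sum>ms\<in>incr_tuples N (length ks).
        (\<Prod>i<length ks. 1 / real (ms ! i) ^ (ks ! i)) *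
        (\<Sum>ns\<in>weak_tuples (last ms) l. \<Prod>i<l. 1 / real (N - ns ! i)))"

definition I0 :: "nat \<Rightarrow> nat \<Rightarrow> nat \<Rightarrow> (nat list \<times> nat) set" where
  "I0 k q h = {(ks, l). ks \<noteq> [] \<and> (\<forall>x\<in>set ks. x > 0) \<and> last ks > 1 \<and>
                sum_list ks + l = k \<and> length ks + l = q \<and>
                length (filter (\<lambda>x. x > 1) ks) = h}"

definition S0 :: "nat \<Rightarrow> nat \<Rightarrow> nat \<Rightarrow> nat \<Rightarrow> real" where
  "S0 N k q h = (\<Sum>(ks, l)\<in>I0 k q h. tzetaN N ks l)"

definition wmonomials :: "nat \<Rightarrow> (nat \<Rightarrow> nat) set" where
  "wmonomials k = {e. (\<forall>j. e j \<noteq> 0 \<longrightarrow> 2 \<le> j \<and> j \<le> k) \<and> (\<Sum>j\<in>{2..k}. j * e j) = k}"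

definition eval_whpoly :: "nat \<Rightarrow> ((nat \<Rightarrow> nat) \<Rightarrow> rat) \<Rightarrow> (nat \<Rightarrow> real) \<Rightarrow> real" where
  "eval_whpoly k c Z = (\<Sum>e\<in>wmonomials k. of_rat (c e) * (\<Prod>j\<in>{2..k}. Z j ^ e j))"

end

theory Submission
  imports Defs "HOL-Computational_Algebra.Formal_Power_Series" "HOL-Computational_Algebra.Fraction_Field"
begin

unbundle fps_syntax


type_synonym F3 = "real fps fps fps"

definition cf :: "F3 \<Rightarrow> nat \<Rightarrow> nat \<Rightarrow> nat \<Rightarrow> real" where
  "cf f a b c = f $ a $ b $ c"

definition mk3 :: "(nat \<Rightarrow> nat \<Rightarrow> nat \<Rightarrow> real) \<Rightarrow> F3" where
  "mk3 g = Abs_fps (\<lambda>a. Abs_fps (\<lambda>b. Abs_fps (\<lambda>c. g a b c)))"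

lemma cf_mk3 [simp]: "cf (mk3 g) a b c = g a b c"
  by (simp add: cf_def mk3_def)

lemma F3_eqI: "(\<And>a b c. cf f a b c = cf g a b c) \<Longrightarrow> f = g"
  unfolding cf_def by (intro fps_ext) auto

lemma cf_add [simp]: "cf (f + g) a b c = cf f a b c + cf g a b c"
  by (simp add: cf_def)
lemma cf_diff [simp]: "cf (f - g) a b c = cf f a b c - cf g a b c"
  by (simp add: cf_def)
lemma cf_uminus [simp]: "cf (- f) a b c = - cf f a b c"
  by (simp add: cf_def)
lemma cf_zero [simp]: "cf 0 a b c = 0"
  by (simp add: cf_def)
lemma cf_one: "cf 1 a b c = (if a = 0 \<and> b = 0 \<and> c = 0 then 1 else 0)"
  by (simp add: cf_def)
lemma cf_sum: "cf (sum f S) a b c = (\<Sum>s\<in>S. cf (f s) a b c)"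
  by (simp add: cf_def fps_sum_nth)

lemma cf_mult: "cf (f * g) a b c =
   (\<Sum>i\<le>a. \<Sum>j\<le>b. \<Sum>k\<le>c. cf f i j k * cf g (a - i) (b - j) (c - k))"
  by (simp add: cf_def fps_mult_nth fps_sum_nth atLeast0AtMost)

definition cst :: "real \<Rightarrow> F3" where "cst r = fps_const (fps_const (fps_const r))"

lemma cf_cst: "cf (cst r) a b c = (if a = 0 \<and> b = 0 \<and> c = 0 then r else 0)"
  by (simp add: cf_def cst_def)

lemma cst_mult: "cst (r * s) = cst r * cst s"
  by (simp add: cst_def)
lemma cst_add: "cst (r + s) = cst r + cst s"
  by (simp add: cst_def)
lemma cst_one [simp]: "cst 1 = 1"
  by (simp add: cst_def)
lemma cst_of_nat: "cst (of_nat n) = of_nat n"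
  by (simp add: cst_def fps_of_nat)

lemma cf_cst_mult: "cf (cst r * f) a b c = r * cf f a b c"
  by (simp add: cf_def cst_def)

lemma cf_of_nat: "cf (of_nat n) a b c = (if a = 0 \<and> b = 0 \<and> c = 0 then real n else 0)"
  by (simp add: cst_of_nat[symmetric] cf_cst)

lemma sum_delta_le: "(\<Sum>k\<le>(c::nat). if k = r then G k else 0) = (if r \<le> c then G r else (0::'a::comm_monoid_add))"
  by (simp add: sum.delta)

lemma sum3_delta: "(\<Sum>i\<le>(a::nat). \<Sum>j\<le>(b::nat). \<Sum>k\<le>(c::nat). if i = p \<and> j = q \<and> k = r then G i j k else 0) =
   (if p \<le> a \<and> q \<le> b \<and> r \<le> c then G p q r else (0::'a::comm_monoid_add))"
proof -
  have "\<And>i j. (\<Sum>k\<le>c. if i = p \<and> j = q \<and> k = r then G i j k else 0) =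
      (if j = q then (if i = p \<and> r \<le> c then G i j r else 0) else 0)"
    by (auto simp: sum.delta)
  hence "\<And>i. (\<Sum>j\<le>b. \<Sum>k\<le>c. if i = p \<and> j = q \<and> k = r then G i j k else 0) =
      (if i = p then (if q \<le> b \<and> r \<le> c then G i q r else 0) else 0)"
    by (auto simp: sum.delta)
  thus ?thesis by (auto simp: sum.delta)
qed

lemma sum2_delta: "(\<Sum>j\<le>(b::nat). \<Sum>k\<le>(c::nat). if j = 0 \<and> k = 0 then G j k else 0) = (G 0 0::'a::comm_monoid_add)"
proof -
  have "\<And>j. (\<Sum>k\<le>c. if j = 0 \<and> k = 0 then G j k else 0) = (if j = 0 then G j 0 else 0)"
    by (auto simp: sum.delta)
  thus ?thesis by (simp add: sum.delta)
qed

definition mono3 :: "nat \<Rightarrow> nat \<Rightarrow> nat \<Rightarrow> F3" where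
  "mono3 p q r = mk3 (\<lambda>a b c. if a = p \<and> b = q \<and> c = r then 1 else 0)"

lemma cf_mono3_mult: "cf (mono3 p q r * f) a b c =
   (if p \<le> a \<and> q \<le> b \<and> r \<le> c then cf f (a - p) (b - q) (c - r) else 0)"
proof -
  have "cf (mono3 p q r * f) a b c =
     (\<Sum>i\<le>a. \<Sum>j\<le>b. \<Sum>k\<le>c. (if i = p \<and> j = q \<and> k = r then cf f (a - i) (b - j) (c - k) else 0))"
    unfolding cf_mult mono3_def cf_mk3 by (intro sum.cong refl) auto
  also have "\<dots> = (if p \<le> a \<and> q \<le> b \<and> r \<le> c then cf f (a - p) (b - q) (c - r) else 0)"
    by (rule sum3_delta)
  finally show ?thesis .
qed

definition pureX :: "(nat \<Rightarrow> real) \<Rightarrow> F3" where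
  "pureX u = mk3 (\<lambda>a b c. if b = 0 \<and> c = 0 then u a else 0)"
definition pureY :: "(nat \<Rightarrow> real) \<Rightarrow> F3" where
  "pureY u = mk3 (\<lambda>a b c. if a = 0 \<and> c = 0 then u b else 0)"

lemma cf_pureX_mult: "cf (pureX u * f) a b c = (\<Sum>i\<le>a. u i * cf f (a - i) b c)"
proof -
  have "cf (pureX u * f) a b c =
     (\<Sum>i\<le>a. \<Sum>j\<le>b. \<Sum>k\<le>c. (if j = 0 \<and> k = 0 then u i * cf f (a - i) (b - j) (c - k) else 0))"
    unfolding cf_mult pureX_def cf_mk3 by (intro sum.cong refl) auto
  also have "\<dots> = (\<Sum>i\<le>a. u i * cf f (a - i) b c)"
    by (intro sum.cong refl, subst sum2_delta, simp)
  finally show ?thesis .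
qed

lemma cf_pureY_mult: "cf (pureY u * f) a b c = (\<Sum>j\<le>b. u j * cf f a (b - j) c)"
proof -
  have "cf (pureY u * f) a b c =
     (\<Sum>i\<le>a. \<Sum>j\<le>b. \<Sum>k\<le>c. (if i = 0 \<and> k = 0 then u j * cf f (a - i) (b - j) (c - k) else 0))"
    unfolding cf_mult pureY_def cf_mk3 by (intro sum.cong refl) auto
  also have "\<dots> = (\<Sum>j\<le>b. \<Sum>i\<le>a. \<Sum>k\<le>c. (if i = 0 \<and> k = 0 then u j * cf f (a - i) (b - j) (c - k) else 0))"
    by (rule sum.swap)
  also have "\<dots> = (\<Sum>j\<le>b. u j * cf f a (b - j) c)"
    by (intro sum.cong refl, subst sum2_delta, simp)
  finally show ?thesis .
qed


lemma key0:
  fixes n a b c z T :: "'a::field"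
  assumes "n \<noteq> 0" "a \<noteq> 0" "b \<noteq> 0" "c \<noteq> 0"
  shows "T - ((a*b + (z - (n-a)*(n-b)))/(a*b)) * T * ((n-(b-c))*b)/(n*c) =
    - T*(((b-c)-(n-a))*((b-c)+(n-b))+z)*(n-(b-c))/(n*a*c) + ((b-c)*((b-c)-(n-a)))/(n*a)*T"
  using assms by (simp add: field_simps) (simp add: algebra_simps)?

lemma rearr: "- Q / D * T * (P / E) = - T * Q * P / (D * (E::'a::field))"
  by (simp add: divide_inverse inverse_mult_distrib mult_ac)

context
  fixes x y z :: "'k::field"
  assumes nx: "\<And>m::nat. m \<ge> 1 \<Longrightarrow> of_nat m \<noteq> x"
      and ny: "\<And>m::nat. m \<ge> 1 \<Longrightarrow> of_nat m \<noteq> y"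
      and n0: "\<And>m::nat. m \<ge> 1 \<Longrightarrow> (of_nat m :: 'k) \<noteq> 0"
begin

definition Pm :: "nat \<Rightarrow> 'k" where
  "Pm M = (\<Prod>m<M. ((of_nat m - x) * (of_nat m + y) + z) / ((of_nat m + 1) * (of_nat m + 1 - x)))"

definition Wp :: "nat \<Rightarrow> nat \<Rightarrow> 'k" where
  "Wp N M = (\<Prod>n\<in>{1..M}. of_nat (N - n) / (of_nat (N - n) - y))"

lemma Wp_Suc: "Wp N (Suc M) = Wp N M * (of_nat (N - Suc M) / (of_nat (N - Suc M) - y))"
  unfolding Wp_def by (simp add: prod.cl_ivl_Suc mult.commute)

lemma Pm_Suc: "Pm (Suc M) = Pm M * (((of_nat M - x) * (of_nat M + y) + z) / ((of_nat M + 1) * (of_nat M + 1 - x)))"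
  unfolding Pm_def by simp

lemma nz2: "(of_nat m :: 'k) + 1 - x \<noteq> 0" using nx[of "Suc m"] by (simp add: add.commute)
lemma nz3: "(of_nat m :: 'k) + 1 \<noteq> 0" using n0[of "Suc m"] by (simp add: add.commute)

lemma Wp_rel: "M \<le> N \<Longrightarrow> Wp (Suc N) M * (of_nat (N - M) * (of_nat N - y)) = Wp N M * (of_nat N * (of_nat (N - M) - y))"
proof (induction M)
  case 0
  then show ?case by (simp add: Wp_def)
next
  case (Suc M)
  hence MN: "M < N" by simp
  have a: "(of_nat (N - M) :: 'k) - y \<noteq> 0" using ny[of "N - M"] MN by auto
  have b: "(of_nat (N - Suc M) :: 'k) - y \<noteq> 0" if "Suc M < N" using ny[of "N - Suc M"] that by auto
  have c: "(of_nat (N - M) :: 'k) \<noteq> 0" using n0[of "N - M"] MN by auto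
  have d: "(of_nat N :: 'k) - y \<noteq> 0" using ny[of N] MN by auto
  have IH: "Wp (Suc N) M * (of_nat (N - M) * (of_nat N - y)) = Wp N M * (of_nat N * (of_nat (N - M) - y))"
    using Suc by simp
  have e: "Suc N - Suc M = N - M" by simp
  show ?case
  proof (cases "Suc M = N")
    case True
    hence "N - Suc M = 0" by simp
    hence z: "Wp N (Suc M) = 0" by (simp add: Wp_Suc[of N M])
    show ?thesis using z \<open>N - Suc M = 0\<close> by simp
  next
    case False
    hence SMN: "Suc M < N" using MN by simp
    have f: "(of_nat (N - M) :: 'k) = of_nat (N - Suc M) + 1" using SMN by (simp add: Suc_diff_Suc)
    have "Wp (Suc N) (Suc M) * (of_nat (N - Suc M) * (of_nat N - y)) =
        Wp (Suc N) M * (of_nat (N - M) * (of_nat N - y)) * (of_nat (N - Suc M) / (of_nat (N - M) - y))"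
      by (simp add: Wp_Suc e a)
    also have "\<dots> = Wp N M * (of_nat N * (of_nat (N - M) - y)) * (of_nat (N - Suc M) / (of_nat (N - M) - y))"
      by (simp add: IH)
    also have "\<dots> = Wp N M * of_nat N * of_nat (N - Suc M)"
      using a by (simp add: field_simps)
    also have "\<dots> = Wp N (Suc M) * (of_nat N * (of_nat (N - Suc M) - y))"
      using b[OF SMN] by (simp add: Wp_Suc field_simps)
    finally show ?thesis .
  qed
qed

definition tt :: "nat \<Rightarrow> nat \<Rightarrow> 'k" where "tt N M = Pm M * Wp N M"

definition BB :: "nat \<Rightarrow> 'k" where "BB n = 1 + (z - x * y) / ((of_nat n - x) * (of_nat n - y))"

lemma tt_Suc_N: "tt (Suc N) N = Pm N * Wp (Suc N) N"
  by (simp add: tt_def)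

lemma saal_step:
  assumes "N \<ge> 1"
  shows "(\<Sum>M<Suc N. tt (Suc N) M) = BB N * (\<Sum>M<N. tt N M)"
proof -
  define G where "G M = - (of_nat M * (of_nat M - x)) / (of_nat N * (of_nat N - x)) * tt (Suc N) M" for M
  have Nx: "(of_nat N :: 'k) - x \<noteq> 0" using nx[of N] assms by auto
  have Ny: "(of_nat N :: 'k) - y \<noteq> 0" using ny[of N] assms by auto
  have N0: "(of_nat N :: 'k) \<noteq> 0" using n0[of N] assms by auto
  have step: "tt (Suc N) M - BB N * tt N M = G (Suc M) - G M" if MN: "M < N" for M
  proof -
    have NMy: "(of_nat (N - M) :: 'k) = of_nat N - of_nat M" using MN by (simp add: of_nat_diff)
    have NM: "(of_nat N :: 'k) - of_nat M - y \<noteq> 0" using ny[of "N - M"] MN NMy by auto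
    have NM': "(of_nat (N - M) :: 'k) - y \<noteq> 0" using ny[of "N - M"] MN by auto
    have e: "Suc N - Suc M = N - M" by simp
    have W1: "Wp (Suc N) (Suc M) = Wp (Suc N) M * (of_nat (N - M) / (of_nat (N - M) - y))"
      by (simp add: Wp_Suc e)
    have W2: "Wp N M = Wp (Suc N) M * (of_nat (N - M) * (of_nat N - y)) / (of_nat N * (of_nat (N - M) - y))"
    proof -
      have B: "(of_nat N * (of_nat (N - M) - y)) \<noteq> (0::'k)" using NM' N0 by simp
      have "Wp N M = Wp N M * (of_nat N * (of_nat (N - M) - y)) / (of_nat N * (of_nat (N - M) - y))"
        using B by simp
      also have "\<dots> = Wp (Suc N) M * (of_nat (N - M) * (of_nat N - y)) / (of_nat N * (of_nat (N - M) - y))"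
        using Wp_rel[of M N] MN by simp
      finally show ?thesis .
    qed
    define T where "T = Pm M * Wp (Suc N) M"
    have L: "tt (Suc N) M - BB N * tt N M = T - BB N * T * ((of_nat N - (of_nat M)) * (of_nat N - y)) / (of_nat N * (of_nat N - of_nat M - y))"
      by (simp add: tt_def T_def W2 mult.assoc NMy)
    have canc: "(of_nat (Suc M) * (of_nat (Suc M) - x)) * (((of_nat M - x) * (of_nat M + y) + z) / ((of_nat M + 1) * (of_nat M + 1 - x)))
        = ((of_nat M - x) * (of_nat M + y) + z)"
      using nz2[of M] nz3[of M] by (simp add: add.commute)
    have R: "G (Suc M) - G M = - T * ((of_nat M - x) * (of_nat M + y) + z) * (of_nat N - of_nat M) / (of_nat N * (of_nat N - x) * (of_nat N - of_nat M - y))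
       + (of_nat M * (of_nat M - x)) / (of_nat N * (of_nat N - x)) * T"
    proof -
      have "G (Suc M) = - ((of_nat (Suc M) * (of_nat (Suc M) - x)) * (((of_nat M - x) * (of_nat M + y) + z) / ((of_nat M + 1) * (of_nat M + 1 - x))))
          / (of_nat N * (of_nat N - x)) * T * (of_nat (N - M) / (of_nat (N - M) - y))"
        by (simp add: G_def tt_def T_def Pm_Suc W1) (simp add: ac_simps)
      also have "\<dots> = - T * ((of_nat M - x) * (of_nat M + y) + z) * (of_nat N - of_nat M) / (of_nat N * (of_nat N - x) * (of_nat N - of_nat M - y))"
        unfolding canc NMy rearr by (simp add: mult.assoc)
      finally show ?thesis by (simp add: G_def tt_def T_def)
    qed
    have BBe: "BB N = ((of_nat N - x) * (of_nat N - y) + (z - x * y)) / ((of_nat N - x) * (of_nat N - y))"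
      unfolding BB_def using Nx Ny by (simp add: add_divide_distrib)
    note K = key0[where n="of_nat N" and a="of_nat N - x" and b="of_nat N - y" and c="of_nat N - of_nat M - y" and z=z and T=T, OF N0 Nx Ny NM]
    have s1: "(of_nat N - y) - (of_nat N - of_nat M - y) = (of_nat M :: 'k)" by simp
    have s2: "(of_nat N :: 'k) - (of_nat N - x) = x" by simp
    have s3: "(of_nat N :: 'k) - (of_nat N - y) = y" by simp
    show ?thesis unfolding L R unfolding BBe
      using K unfolding s1 s2 s3 by simp
  qed
  have "(\<Sum>M<Suc N. tt (Suc N) M) = (\<Sum>M<N. tt (Suc N) M) + tt (Suc N) N" by simp
  also have "(\<Sum>M<N. tt (Suc N) M) = (\<Sum>M<N. BB N * tt N M + (G (Suc M) - G M))"
    using step by (intro sum.cong) (auto simp: algebra_simps)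
  also have "\<dots> = BB N * (\<Sum>M<N. tt N M) + (G N - G 0)"
    by (simp add: sum.distrib sum_distrib_left sum_lessThan_telescope)
  also have "G N = - tt (Suc N) N" using Nx N0 by (simp add: G_def)
  also have "G 0 = 0" by (simp add: G_def)
  finally show ?thesis by simp
qed

lemma saal:
  assumes "N \<ge> 1"
  shows "(\<Sum>M<N. tt N M) = (\<Prod>n\<in>{1..<N}. BB n)"
  using assms
proof (induction N rule: dec_induct)
  case base
  then show ?case by (simp add: tt_def Pm_def Wp_def)
next
  case (step N)
  then show ?case using saal_step[of N] by (simp add: prod.atLeastLessThan_Suc mult.commute)
qed

definition AA :: "nat \<Rightarrow> 'k" where "AA m = 1 + y / of_nat m + z / (of_nat m * (of_nat m - x))"

lemma Pm_closed: "M \<ge> 1 \<Longrightarrow> Pm M = (z - x * y) / (of_nat M * (of_nat M - x)) * (\<Prod>m\<in>{1..<M}. AA m)"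
proof (induction M rule: dec_induct)
  case base
  then show ?case by (simp add: Pm_def)
next
  case (step M)
  have M0: "(of_nat M :: 'k) \<noteq> 0" using n0[of M] step by auto
  have Mx: "(of_nat M :: 'k) - x \<noteq> 0" using nx[of M] step by auto
  have A: "AA M = ((of_nat M - x) * (of_nat M + y) + z) / (of_nat M * (of_nat M - x))"
    unfolding AA_def using M0 Mx by (simp add: field_simps)
  show ?case using step.IH step.hyps M0 Mx nz2[of M] nz3[of M]
    by (simp add: Pm_Suc prod.atLeastLessThan_Suc A add.commute) (simp add: ac_simps)
qed

lemma saal_final:
  assumes "N \<ge> 1"
  shows "1 + (z - x * y) * (\<Sum>M\<in>{1..<N}. 1 / (of_nat M * (of_nat M - x)) * (\<Prod>m\<in>{1..<M}. AA m) * Wp N M)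
     = (\<Prod>n\<in>{1..<N}. BB n)"
proof -
  have "(\<Sum>M<N. tt N M) = tt N 0 + (\<Sum>M\<in>{1..<N}. tt N M)"
  proof -
    have "{..<N} = insert 0 {1..<N}" using assms by auto
    thus ?thesis by simp
  qed
  also have "tt N 0 = 1" by (simp add: tt_def Pm_def Wp_def)
  also have "(\<Sum>M\<in>{1..<N}. tt N M) = (z - x * y) * (\<Sum>M\<in>{1..<N}. 1 / (of_nat M * (of_nat M - x)) * (\<Prod>m\<in>{1..<M}. AA m) * Wp N M)"
    unfolding sum_distrib_left
    by (intro sum.cong refl) (simp add: tt_def Pm_closed)
  finally show ?thesis using saal[OF assms] by simp
qed

end

definition Hs :: "nat \<Rightarrow> nat \<Rightarrow> nat \<Rightarrow> real" where
  "Hs N M l = (\<Sum>ns\<in>weak_tuples M l. \<Prod>i<l. 1 / real (N - ns ! i))"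

definition Wsum :: "nat \<Rightarrow> nat list \<Rightarrow> real" where
  "Wsum M ks = (\<Sum>ms\<in>incr_tuples M (length ks). \<Prod>i<length ks. 1 / real (ms ! i) ^ (ks ! i))"

definition n1 :: "nat list \<Rightarrow> nat" where "n1 ks = length (filter (\<lambda>x. x = 1) ks)"
definition n2 :: "nat list \<Rightarrow> nat" where "n2 ks = length (filter (\<lambda>x. 1 < x) ks)"

definition Comp :: "nat \<Rightarrow> nat \<Rightarrow> nat \<Rightarrow> nat list set" where
  "Comp a b c = {ks. (\<forall>x\<in>set ks. 0 < x) \<and> n1 ks = b \<and> n2 ks = c \<and> sum_list ks = a + b + 2 * c}"

definition Wc :: "nat \<Rightarrow> nat \<Rightarrow> nat \<Rightarrow> nat \<Rightarrow> real" where
  "Wc M a b c = (\<Sum>ks\<in>Comp a b c. Wsum M ks)"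

lemma finite_weak_tuples: "finite (weak_tuples M l)"
proof -
  have "weak_tuples M l \<subseteq> {xs. set xs \<subseteq> {1..M} \<and> length xs = l}"
    unfolding weak_tuples_def by auto
  thus ?thesis using finite_lists_length_eq[of "{1..M}" l] finite_subset by blast
qed

lemma finite_incr_tuples: "finite (incr_tuples M r)"
proof -
  have "incr_tuples M r \<subseteq> {xs. set xs \<subseteq> {1..<M} \<and> length xs = r}"
    unfolding incr_tuples_def by auto
  thus ?thesis using finite_lists_length_eq[of "{1..<M}" r] finite_subset by blast
qed

lemma pos_len: "(\<forall>x\<in>set ks. 0 < x) \<Longrightarrow> length ks = n1 ks + n2 ks"
  unfolding n1_def n2_def by (induction ks) auto

lemma pos_sum: "(\<forall>x\<in>set ks. 0 < x) \<Longrightarrow> n1 ks + 2 * n2 ks \<le> sum_list ks"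
  unfolding n1_def n2_def by (induction ks) auto

lemma finite_Comp: "finite (Comp a b c)"
proof -
  have "Comp a b c \<subseteq> {xs. set xs \<subseteq> {0..a + b + 2 * c} \<and> length xs = b + c}"
  proof
    fix ks assume k: "ks \<in> Comp a b c"
    hence "length ks = b + c" using pos_len[of ks] unfolding Comp_def by auto
    moreover have "set ks \<subseteq> {0..a + b + 2 * c}"
      using k member_le_sum_list[of _ ks] unfolding Comp_def by fastforce
    ultimately show "ks \<in> {xs. set xs \<subseteq> {0..a + b + 2 * c} \<and> length xs = b + c}" by simp
  qed
  thus ?thesis using finite_lists_length_eq[of "{0..a + b + 2 * c}" "b + c"] finite_subset by blast
qed

lemma weak_tuples_0 [simp]: "weak_tuples M 0 = {[]}"
  unfolding weak_tuples_def by auto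

lemma incr_tuples_0 [simp]: "incr_tuples M 0 = {[]}"
  unfolding incr_tuples_def by auto

lemma weak_tuples_Suc:
  "weak_tuples (Suc M) (Suc l) = weak_tuples M (Suc l) \<union> (\<lambda>ns. ns @ [Suc M]) ` weak_tuples (Suc M) l"
proof (intro equalityI subsetI)
  fix ns assume ns: "ns \<in> weak_tuples (Suc M) (Suc l)"
  hence "ns \<noteq> []" unfolding weak_tuples_def by auto
  then obtain xs y where e: "ns = xs @ [y]" by (metis rev_exhaust)
  have len: "length xs = l" and so: "sorted xs" and le: "\<forall>x\<in>set xs. x \<le> y" and rg: "set xs \<subseteq> {1..Suc M}" "y \<in> {1..Suc M}"
    using ns unfolding e weak_tuples_def by (auto simp: sorted_append)
  show "ns \<in> weak_tuples M (Suc l) \<union> (\<lambda>ns. ns @ [Suc M]) ` weak_tuples (Suc M) l"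
  proof (cases "y = Suc M")
    case True
    hence "xs \<in> weak_tuples (Suc M) l" using len so rg unfolding weak_tuples_def by auto
    thus ?thesis using e True by auto
  next
    case False
    hence yM: "y \<le> M" using rg by auto
    have "set xs \<subseteq> {1..M}" using rg le yM by force
    hence "ns \<in> weak_tuples M (Suc l)" using ns e yM rg unfolding weak_tuples_def by auto
    thus ?thesis by simp
  qed
next
  fix ns assume "ns \<in> weak_tuples M (Suc l) \<union> (\<lambda>ns. ns @ [Suc M]) ` weak_tuples (Suc M) l"
  thus "ns \<in> weak_tuples (Suc M) (Suc l)"
    unfolding weak_tuples_def by (auto simp: sorted_append subset_iff)
qed

lemma Hs_0 [simp]: "Hs N M 0 = 1"
  by (simp add: Hs_def)

lemma Hs_rec: "Hs N (Suc M) (Suc l) = Hs N M (Suc l) + Hs N (Suc M) l / real (N - Suc M)"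
proof -
  have disj: "weak_tuples M (Suc l) \<inter> (\<lambda>ns. ns @ [Suc M]) ` weak_tuples (Suc M) l = {}"
    unfolding weak_tuples_def by auto
  have inj: "inj_on (\<lambda>ns. ns @ [Suc M]) (weak_tuples (Suc M) l)" by (auto simp: inj_on_def)
  have "Hs N (Suc M) (Suc l) = Hs N M (Suc l) +
      (\<Sum>ns\<in>weak_tuples (Suc M) l. \<Prod>i<Suc l. 1 / real (N - (ns @ [Suc M]) ! i))"
    unfolding Hs_def weak_tuples_Suc
    by (simp add: sum.union_disjoint finite_weak_tuples disj sum.reindex[OF inj])
  also have "(\<Sum>ns\<in>weak_tuples (Suc M) l. \<Prod>i<Suc l. 1 / real (N - (ns @ [Suc M]) ! i)) =
      (\<Sum>ns\<in>weak_tuples (Suc M) l. (\<Prod>i<l. 1 / real (N - ns ! i)) / real (N - Suc M))"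
  proof (intro sum.cong refl)
    fix ns assume "ns \<in> weak_tuples (Suc M) l"
    hence len: "length ns = l" unfolding weak_tuples_def by auto
    have "(\<Prod>i<l. 1 / real (N - (ns @ [Suc M]) ! i)) = (\<Prod>i<l. 1 / real (N - ns ! i))"
      by (intro prod.cong refl) (auto simp: nth_append len)
    moreover have "(ns @ [Suc M]) ! l = Suc M" by (metis len nth_append_length)
    ultimately show "(\<Prod>i<Suc l. 1 / real (N - (ns @ [Suc M]) ! i)) = (\<Prod>i<l. 1 / real (N - ns ! i)) / real (N - Suc M)"
      by (simp add: prod.lessThan_Suc)
  qed
  also have "\<dots> = Hs N (Suc M) l / real (N - Suc M)"
    by (simp add: Hs_def sum_divide_distrib)
  finally show ?thesis .
qed

lemma Hs_conv: "Hs N (Suc M) l = (\<Sum>i\<le>l. Hs N M (l - i) / real (N - Suc M) ^ i)"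
proof (induction l)
  case 0
  then show ?case by simp
next
  case (Suc l)
  have "Hs N (Suc M) (Suc l) = Hs N M (Suc l) + (\<Sum>i\<le>l. Hs N M (l - i) / real (N - Suc M) ^ Suc i)"
    by (simp add: Hs_rec Suc sum_divide_distrib power_commutes)
  also have "\<dots> = (\<Sum>i\<le>Suc l. Hs N M (Suc l - i) / real (N - Suc M) ^ i)"
    by (subst sum.atMost_Suc_shift) (simp add: power_commutes)
  finally show ?case .
qed

lemma incr_tuples_Suc:
  assumes "M \<ge> 1"
  shows "incr_tuples (Suc M) (Suc r) = incr_tuples M (Suc r) \<union> (\<lambda>ms. ms @ [M]) ` incr_tuples M r"
proof (intro equalityI subsetI)
  fix ms assume ms: "ms \<in> incr_tuples (Suc M) (Suc r)"
  hence "ms \<noteq> []" unfolding incr_tuples_def by auto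
  then obtain xs y where e: "ms = xs @ [y]" by (metis rev_exhaust)
  show "ms \<in> incr_tuples M (Suc r) \<union> (\<lambda>ms. ms @ [M]) ` incr_tuples M r"
  proof (cases "y = M")
    case True
    hence "xs \<in> incr_tuples M r" using ms e unfolding incr_tuples_def by (auto simp: sorted_wrt_append)
    thus ?thesis using e True by auto
  next
    case False
    hence "y < M" using ms e unfolding incr_tuples_def by auto
    have "\<forall>x\<in>set xs. x < y" "set xs \<subseteq> {1..<Suc M}" using ms e unfolding incr_tuples_def by (auto simp: sorted_wrt_append)
    hence "set xs \<subseteq> {1..<M}" using \<open>y < M\<close> by force
    hence "ms \<in> incr_tuples M (Suc r)" using ms e \<open>y < M\<close> unfolding incr_tuples_def
      by (auto simp: sorted_wrt_append)
    thus ?thesis by simp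
  qed
next
  fix ms assume "ms \<in> incr_tuples M (Suc r) \<union> (\<lambda>ms. ms @ [M]) ` incr_tuples M r"
  thus "ms \<in> incr_tuples (Suc M) (Suc r)"
    using assms unfolding incr_tuples_def by (auto simp: sorted_wrt_append subset_iff)
qed

lemma incr_tuples_last:
  "incr_tuples N (Suc r) = (\<Union>M\<in>{1..<N}. (\<lambda>ms. ms @ [M]) ` incr_tuples M r)"
proof (intro equalityI subsetI)
  fix ms assume ms: "ms \<in> incr_tuples N (Suc r)"
  hence "ms \<noteq> []" unfolding incr_tuples_def by auto
  then obtain xs y where e: "ms = xs @ [y]" by (metis rev_exhaust)
  have "y \<in> {1..<N}" "xs \<in> incr_tuples y r" using ms e unfolding incr_tuples_def by (auto simp: sorted_wrt_append)
  thus "ms \<in> (\<Union>M\<in>{1..<N}. (\<lambda>ms. ms @ [M]) ` incr_tuples M r)" using e by auto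
next
  fix ms assume "ms \<in> (\<Union>M\<in>{1..<N}. (\<lambda>ms. ms @ [M]) ` incr_tuples M r)"
  thus "ms \<in> incr_tuples N (Suc r)"
    unfolding incr_tuples_def by (auto simp: sorted_wrt_append subset_iff)
qed

lemma prod_snoc:
  assumes len: "length ms = length ks"
  shows "(\<Prod>i<length (ks @ [k]). 1 / real ((ms @ [M]) ! i) ^ ((ks @ [k]) ! i)) =
    (\<Prod>i<length ks. 1 / real (ms ! i) ^ (ks ! i)) / real M ^ k"
proof -
  have "(\<Prod>i<length ks. 1 / real ((ms @ [M]) ! i) ^ ((ks @ [k]) ! i)) = (\<Prod>i<length ks. 1 / real (ms ! i) ^ (ks ! i))"
    by (intro prod.cong refl) (auto simp: nth_append len)
  moreover have "(ms @ [M]) ! length ks = M" "(ks @ [k]) ! length ks = k" by (metis len nth_append_length)+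
  ultimately show ?thesis by (simp add: prod.lessThan_Suc)
qed

lemma Wsum_nil [simp]: "Wsum M [] = 1"
  by (simp add: Wsum_def)

lemma Wsum_Suc:
  assumes "M \<ge> 1"
  shows "Wsum (Suc M) ks = Wsum M ks + (if ks = [] then 0 else Wsum M (butlast ks) / real M ^ last ks)"
proof (cases ks rule: rev_cases)
  case Nil
  then show ?thesis by simp
next
  case (snoc ks' k)
  have disj: "incr_tuples M (Suc (length ks')) \<inter> (\<lambda>ms. ms @ [M]) ` incr_tuples M (length ks') = {}"
    unfolding incr_tuples_def by auto
  have inj: "inj_on (\<lambda>ms. ms @ [M]) (incr_tuples M (length ks'))" by (auto simp: inj_on_def)
  have "Wsum (Suc M) (ks' @ [k]) = Wsum M (ks' @ [k]) +
     (\<Sum>ms\<in>incr_tuples M (length ks'). \<Prod>i<length (ks' @ [k]). 1 / real ((ms @ [M]) ! i) ^ ((ks' @ [k]) ! i))"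
    unfolding Wsum_def length_append_singleton incr_tuples_Suc[OF assms]
    by (simp add: sum.union_disjoint finite_incr_tuples disj sum.reindex[OF inj])
  also have "(\<Sum>ms\<in>incr_tuples M (length ks'). \<Prod>i<length (ks' @ [k]). 1 / real ((ms @ [M]) ! i) ^ ((ks' @ [k]) ! i))
      = (\<Sum>ms\<in>incr_tuples M (length ks'). (\<Prod>i<length ks'. 1 / real (ms ! i) ^ (ks' ! i)) / real M ^ k)"
    by (intro sum.cong refl prod_snoc) (auto simp: incr_tuples_def)
  also have "\<dots> = Wsum M ks' / real M ^ k"
    by (simp add: Wsum_def sum_divide_distrib)
  finally show ?thesis using snoc by simp
qed

lemma tzeta_snoc:
  "tzetaN N (ks @ [k]) l = (\<Sum>M\<in>{1..<N}. Wsum M ks / real M ^ k * Hs N M l)"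
proof -
  let ?r = "length ks"
  let ?f = "\<lambda>ms. (\<Prod>i<length (ks @ [k]). 1 / real (ms ! i) ^ ((ks @ [k]) ! i)) *
        (\<Sum>ns\<in>weak_tuples (last ms) l. \<Prod>i<l. 1 / real (N - ns ! i))"
  have inj: "inj_on (\<lambda>ms. ms @ [M]) (incr_tuples M ?r)" for M by (auto simp: inj_on_def)
  have disj: "\<forall>M\<in>{1..<N}. \<forall>M'\<in>{1..<N}. M \<noteq> M' \<longrightarrow>
      (\<lambda>ms. ms @ [M]) ` incr_tuples M ?r \<inter> (\<lambda>ms. ms @ [M']) ` incr_tuples M' ?r = {}"
    by auto
  have "tzetaN N (ks @ [k]) l = (\<Sum>ms\<in>(\<Union>M\<in>{1..<N}. (\<lambda>ms. ms @ [M]) ` incr_tuples M ?r). ?f ms)"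
    unfolding tzetaN_def length_append_singleton incr_tuples_last by simp
  also have "\<dots> = (\<Sum>M\<in>{1..<N}. \<Sum>ms\<in>(\<lambda>ms. ms @ [M]) ` incr_tuples M ?r. ?f ms)"
    by (rule sum.UNION_disjoint) (auto simp: finite_incr_tuples)
  also have "\<dots> = (\<Sum>M\<in>{1..<N}. \<Sum>ms\<in>incr_tuples M ?r. ?f (ms @ [M]))"
    by (simp add: sum.reindex[OF inj])
  also have "\<dots> = (\<Sum>M\<in>{1..<N}. Wsum M ks / real M ^ k * Hs N M l)"
  proof (intro sum.cong refl)
    fix M
    have "(\<Sum>ms\<in>incr_tuples M ?r. ?f (ms @ [M])) =
        (\<Sum>ms\<in>incr_tuples M ?r. (\<Prod>i<length ks. 1 / real (ms ! i) ^ (ks ! i)) / real M ^ k * Hs N M l)"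
    proof (intro sum.cong refl)
      fix ms assume "ms \<in> incr_tuples M ?r"
      hence len: "length ms = length ks" by (simp add: incr_tuples_def)
      show "?f (ms @ [M]) = (\<Prod>i<length ks. 1 / real (ms ! i) ^ (ks ! i)) / real M ^ k * Hs N M l"
        unfolding prod_snoc[OF len] by (simp add: Hs_def)
    qed
    also have "\<dots> = Wsum M ks / real M ^ k * Hs N M l"
      by (simp add: Wsum_def sum_divide_distrib sum_distrib_right)
    finally show "(\<Sum>ms\<in>incr_tuples M ?r. ?f (ms @ [M])) = Wsum M ks / real M ^ k * Hs N M l" .
  qed
  finally show ?thesis .
qed

lemma n1_snoc [simp]: "n1 (ks @ [k]) = n1 ks + (if k = 1 then 1 else 0)"
  by (simp add: n1_def)
lemma n2_snoc [simp]: "n2 (ks @ [k]) = n2 ks + (if 1 < k then 1 else 0)"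
  by (simp add: n2_def)
lemma n1_nil [simp]: "n1 [] = 0" by (simp add: n1_def)
lemma n2_nil [simp]: "n2 [] = 0" by (simp add: n2_def)

lemma Comp_nil: "[] \<in> Comp a b c \<longleftrightarrow> a = 0 \<and> b = 0 \<and> c = 0"
  by (auto simp: Comp_def)

lemma Comp_snoc1: "ks @ [1] \<in> Comp a b c \<longleftrightarrow> 1 \<le> b \<and> ks \<in> Comp a (b - 1) c"
  by (auto simp: Comp_def)

lemma Comp_snoc2: "ks @ [i + 2] \<in> Comp a b c \<longleftrightarrow> 1 \<le> c \<and> i \<le> a \<and> ks \<in> Comp (a - i) b (c - 1)"
proof
  assume A: "ks @ [i + 2] \<in> Comp a b c"
  hence pos: "\<forall>x\<in>set ks. 0 < x" and e1: "n1 ks = b" and e2: "n2 ks + 1 = c"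
    and e3: "sum_list ks + i + 2 = a + b + 2 * c" by (auto simp: Comp_def)
  have "n1 ks + 2 * n2 ks \<le> sum_list ks" using pos_sum[OF pos] .
  hence "i \<le> a" using e1 e2 e3 by linarith
  thus "1 \<le> c \<and> i \<le> a \<and> ks \<in> Comp (a - i) b (c - 1)"
    using pos e1 e2 e3 by (auto simp: Comp_def)
next
  assume "1 \<le> c \<and> i \<le> a \<and> ks \<in> Comp (a - i) b (c - 1)"
  thus "ks @ [i + 2] \<in> Comp a b c" by (auto simp: Comp_def)
qed

lemma Comp_split:
  "Comp a b c = (Comp a b c \<inter> {[]}) \<union> (\<lambda>ks. ks @ [1]) ` {ks. ks @ [1] \<in> Comp a b c}
     \<union> (\<Union>i\<le>a. (\<lambda>ks. ks @ [i + 2]) ` {ks. ks @ [i + 2] \<in> Comp a b c})"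
proof (intro equalityI subsetI)
  fix ks assume ks: "ks \<in> Comp a b c"
  show "ks \<in> (Comp a b c \<inter> {[]}) \<union> (\<lambda>ks. ks @ [1]) ` {ks. ks @ [1] \<in> Comp a b c}
     \<union> (\<Union>i\<le>a. (\<lambda>ks. ks @ [i + 2]) ` {ks. ks @ [i + 2] \<in> Comp a b c})"
  proof (cases ks rule: rev_cases)
    case Nil
    then show ?thesis using ks by simp
  next
    case (snoc ks' k)
    have "0 < k" using ks snoc by (auto simp: Comp_def)
    show ?thesis
    proof (cases "k = 1")
      case True
      hence "ks \<in> (\<lambda>ks. ks @ [1]) ` {ks. ks @ [1] \<in> Comp a b c}"
        using ks snoc by (intro image_eqI[where x=ks']) auto
      thus ?thesis by (rule UnI1[OF UnI2])
    next
      case False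
      hence "k \<ge> 2" using \<open>0 < k\<close> by simp
      define i where "i = k - 2"
      have i: "k = i + 2" using \<open>k \<ge> 2\<close> by (simp add: i_def)
      have mem: "ks' @ [i + 2] \<in> Comp a b c" using ks snoc i by simp
      hence ia: "i \<le> a" using Comp_snoc2 by blast
      have "ks \<in> (\<lambda>ks. ks @ [i + 2]) ` {ks. ks @ [i + 2] \<in> Comp a b c}"
        using mem snoc i by (intro image_eqI[where x=ks']) auto
      hence "ks \<in> (\<Union>i\<le>a. (\<lambda>ks. ks @ [i + 2]) ` {ks. ks @ [i + 2] \<in> Comp a b c})"
        using ia by (intro UN_I[where a=i]) auto
      thus ?thesis by (rule UnI2)
    qed
  qed
next
  fix ks assume "ks \<in> (Comp a b c \<inter> {[]}) \<union> (\<lambda>ks. ks @ [1]) ` {ks. ks @ [1] \<in> Comp a b c}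
     \<union> (\<Union>i\<le>a. (\<lambda>ks. ks @ [i + 2]) ` {ks. ks @ [i + 2] \<in> Comp a b c})"
  thus "ks \<in> Comp a b c" by blast
qed

lemma S1_eq: "{ks. ks @ [1] \<in> Comp a b c} = (if 1 \<le> b then Comp a (b - 1) c else {})"
  using Comp_snoc1 by auto

lemma S2_eq: "i \<le> a \<Longrightarrow> {ks. ks @ [i + 2] \<in> Comp a b c} = (if 1 \<le> c then Comp (a - i) b (c - 1) else {})"
  using Comp_snoc2 by auto

lemma sum_Comp:
  "(\<Sum>ks\<in>Comp a b c. f ks) = (if a = 0 \<and> b = 0 \<and> c = 0 then f [] else 0)
     + (if 1 \<le> b then (\<Sum>ks\<in>Comp a (b - 1) c. f (ks @ [1])) else 0)
     + (if 1 \<le> c then (\<Sum>i\<le>a. \<Sum>ks\<in>Comp (a - i) b (c - 1). f (ks @ [i + 2])) else 0)"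
proof -
  let ?C0 = "Comp a b c \<inter> {[]}"
  let ?S1 = "{ks. ks @ [1] \<in> Comp a b c}"
  let ?S2 = "\<lambda>i. {ks. ks @ [i + 2] \<in> Comp a b c}"
  have fS1: "finite ?S1" unfolding S1_eq by (simp add: finite_Comp)
  have fS2: "finite (?S2 i)" if "i \<le> a" for i unfolding S2_eq[OF that] by (simp add: finite_Comp)
  have inj1: "inj_on (\<lambda>ks. ks @ [1::nat]) A" for A by (auto simp: inj_on_def)
  have inj2: "inj_on (\<lambda>ks. ks @ [i + 2::nat]) A" for A i by (auto simp: inj_on_def)
  have d1: "(?C0 \<union> (\<lambda>ks. ks @ [1]) ` ?S1) \<inter> (\<Union>i\<le>a. (\<lambda>ks. ks @ [i + 2]) ` ?S2 i) = {}" by auto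
  have d2: "?C0 \<inter> (\<lambda>ks. ks @ [1]) ` ?S1 = {}" by auto
  have "(\<Sum>ks\<in>Comp a b c. f ks) = (\<Sum>ks\<in>?C0. f ks) + (\<Sum>ks\<in>(\<lambda>ks. ks @ [1]) ` ?S1. f ks)
      + (\<Sum>ks\<in>(\<Union>i\<le>a. (\<lambda>ks. ks @ [i + 2]) ` ?S2 i). f ks)"
  proof -
    have fin0: "finite ?C0" by simp
    have fin1: "finite ((\<lambda>ks. ks @ [1]) ` ?S1)" using fS1 by simp
    have fin2: "finite (\<Union>i\<le>a. (\<lambda>ks. ks @ [i + 2]) ` ?S2 i)" using fS2 by simp
    show ?thesis
      apply (subst Comp_split)
      apply (subst sum.union_disjoint[OF _ fin2 d1])
      using fin0 fin1 apply simp
      apply (subst sum.union_disjoint[OF fin0 fin1 d2])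
      apply (rule refl)
      done
  qed
  also have "(\<Sum>ks\<in>?C0. f ks) = (if a = 0 \<and> b = 0 \<and> c = 0 then f [] else 0)"
    using Comp_nil[of a b c] by auto
  also have "(\<Sum>ks\<in>(\<lambda>ks. ks @ [1]) ` ?S1. f ks) = (if 1 \<le> b then (\<Sum>ks\<in>Comp a (b - 1) c. f (ks @ [1])) else 0)"
    by (subst sum.reindex[OF inj1], unfold S1_eq, simp)
  also have "(\<Sum>ks\<in>(\<Union>i\<le>a. (\<lambda>ks. ks @ [i + 2]) ` ?S2 i). f ks) = (\<Sum>i\<le>a. \<Sum>ks\<in>(\<lambda>ks. ks @ [i + 2]) ` ?S2 i. f ks)"
    by (rule sum.UNION_disjoint) (use fS2 in auto)
  also have "\<dots> = (\<Sum>i\<le>a. \<Sum>ks\<in>?S2 i. f (ks @ [i + 2]))"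
    by (rule sum.cong[OF refl]) (subst sum.reindex[OF inj2], simp add: comp_def)
  also have "\<dots> = (\<Sum>i\<le>a. if 1 \<le> c then (\<Sum>ks\<in>Comp (a - i) b (c - 1). f (ks @ [i + 2])) else 0)"
  proof (rule sum.cong[OF refl])
    fix i assume "i \<in> {..a}"
    hence ia: "i \<le> a" by simp
    show "(\<Sum>ks\<in>?S2 i. f (ks @ [i + 2])) = (if 1 \<le> c then (\<Sum>ks\<in>Comp (a - i) b (c - 1). f (ks @ [i + 2])) else 0)"
      unfolding S2_eq[OF ia] by simp
  qed
  also have "\<dots> = (if 1 \<le> c then (\<Sum>i\<le>a. \<Sum>ks\<in>Comp (a - i) b (c - 1). f (ks @ [i + 2])) else 0)"
    by simp
  finally show ?thesis .
qed

lemma Wc_rec: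
  assumes "M \<ge> 1"
  shows "Wc (Suc M) a b c = Wc M a b c + (if 1 \<le> b then Wc M a (b - 1) c / real M else 0)
     + (if 1 \<le> c then (\<Sum>i\<le>a. Wc M (a - i) b (c - 1) / real M ^ (i + 2)) else 0)"
proof -
  define R where "R ks = (if ks = [] then 0 else Wsum M (butlast ks) / real M ^ last ks)" for ks
  have "Wc (Suc M) a b c = Wc M a b c + (\<Sum>ks\<in>Comp a b c. R ks)"
    unfolding Wc_def R_def by (simp add: Wsum_Suc[OF assms] sum.distrib)
  also have "(\<Sum>ks\<in>Comp a b c. R ks) = (if 1 \<le> b then Wc M a (b - 1) c / real M else 0)
     + (if 1 \<le> c then (\<Sum>i\<le>a. Wc M (a - i) b (c - 1) / real M ^ (i + 2)) else 0)"
    by (subst sum_Comp) (simp add: R_def Wc_def sum_divide_distrib)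
  finally show ?thesis by simp
qed

lemma I0_mem: "(ks, l) \<in> I0 k q h \<longleftrightarrow> ks \<noteq> [] \<and> (\<forall>x\<in>set ks. x > 0) \<and> last ks > 1 \<and>
    sum_list ks + l = k \<and> length ks + l = q \<and> n2 ks = h"
  by (simp add: I0_def n2_def)

lemma I0_nonempty:
  assumes "(ks, l) \<in> I0 k q h"
  shows "1 \<le> h \<and> h \<le> q \<and> q + h \<le> k"
proof -
  have A: "ks \<noteq> []" "\<forall>x\<in>set ks. x > 0" "last ks > 1" "sum_list ks + l = k" "length ks + l = q" "n2 ks = h"
    using assms by (auto simp: I0_mem)
  have "last ks \<in> set ks" using A(1) by simp
  hence "1 \<le> n2 ks" using A(3) unfolding n2_def
    by (metis One_nat_def Suc_le_eq filter_empty_conv length_greater_0_conv)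
  moreover have "length ks = n1 ks + n2 ks" using pos_len A(2) by blast
  moreover have "n1 ks + 2 * n2 ks \<le> sum_list ks" using pos_sum A(2) by blast
  ultimately show ?thesis using A by linarith
qed

lemma I0_eq:
  "I0 (a + b + 2 * c + 2) (b + c + 1) (c + 1) =
     (\<lambda>(l, i, ks). (ks @ [i + 2], l)) ` (SIGMA l:{..b}. SIGMA i:{..a}. Comp (a - i) (b - l) c)"
proof (intro equalityI subsetI)
  fix p assume p: "p \<in> I0 (a + b + 2 * c + 2) (b + c + 1) (c + 1)"
  obtain ks0 l where pe: "p = (ks0, l)" by (cases p)
  have A: "ks0 \<noteq> []" "\<forall>x\<in>set ks0. x > 0" "last ks0 > 1" "sum_list ks0 + l = a + b + 2 * c + 2"
     "length ks0 + l = b + c + 1" "n2 ks0 = c + 1"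
    using p unfolding pe I0_mem by blast+
  obtain ks k where e: "ks0 = ks @ [k]" using A(1) by (metis rev_exhaust)
  have k1: "1 < k" using A(3) e by simp
  define i where "i = k - 2"
  have i: "k = i + 2" using k1 by (simp add: i_def)
  have pos: "\<forall>x\<in>set ks. x > 0" using A(2) e by simp
  have n2e: "n2 ks = c" using A(6) e k1 by simp
  have n1e: "length ks = n1 ks + n2 ks" using pos_len[OF pos] .
  have sume: "n1 ks + 2 * n2 ks \<le> sum_list ks" using pos_sum[OF pos] .
  have len: "length ks + 1 + l = b + c + 1" using A(5) e by simp
  have sm: "sum_list ks + (i + 2) + l = a + b + 2 * c + 2" using A(4) e i by simp
  have lb: "l \<le> b" using len n1e n2e by linarith
  have n1v: "n1 ks = b - l" using len n1e n2e by linarith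
  have ia: "i \<le> a" using sm n1v n2e sume lb by linarith
  have sv: "sum_list ks = (a - i) + (b - l) + 2 * c" using sm ia lb by linarith
  have "ks \<in> Comp (a - i) (b - l) c"
    unfolding Comp_def using pos n1v n2e sv by blast
  hence "(l, i, ks) \<in> (SIGMA l:{..b}. SIGMA i:{..a}. Comp (a - i) (b - l) c)"
    using lb ia by blast
  moreover have "p = (\<lambda>(l, i, ks). (ks @ [i + 2], l)) (l, i, ks)" using pe e i by simp
  ultimately show "p \<in> (\<lambda>(l, i, ks). (ks @ [i + 2], l)) ` (SIGMA l:{..b}. SIGMA i:{..a}. Comp (a - i) (b - l) c)"
    by (rule rev_image_eqI)
next
  fix p assume "p \<in> (\<lambda>(l, i, ks). (ks @ [i + 2], l)) ` (SIGMA l:{..b}. SIGMA i:{..a}. Comp (a - i) (b - l) c)"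
  then obtain l i ks where pe: "p = (ks @ [i + 2], l)" and lb: "l \<le> b" and ia: "i \<le> a"
    and ks: "ks \<in> Comp (a - i) (b - l) c" by auto
  have pos: "\<forall>x\<in>set ks. x > 0" and n1v: "n1 ks = b - l" and n2v: "n2 ks = c"
    and sv: "sum_list ks = (a - i) + (b - l) + 2 * c" using ks unfolding Comp_def by blast+
  have len: "length ks = b - l + c" using pos_len[OF pos] n1v n2v by simp
  have s2: "sum_list (ks @ [i + 2]) + l = a + b + 2 * c + 2" using sv ia lb by simp
  have l2: "length (ks @ [i + 2]) + l = b + c + 1" using len lb by simp
  have n2': "n2 (ks @ [i + 2]) = c + 1" using n2v by simp
  have pos': "\<forall>x\<in>set (ks @ [i + 2]). x > 0" using pos by simp
  show "p \<in> I0 (a + b + 2 * c + 2) (b + c + 1) (c + 1)"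
    unfolding pe I0_mem using s2 l2 n2' pos' by simp
qed

lemma sum3_swap:
  fixes F :: "nat \<Rightarrow> nat \<Rightarrow> nat \<Rightarrow> real"
  shows "(\<Sum>l\<le>b. \<Sum>i\<le>a. \<Sum>M\<in>A. F l i M) = (\<Sum>M\<in>A. \<Sum>i\<le>a. \<Sum>l\<le>b. F l i M)"
proof -
  have "(\<Sum>l\<le>b. \<Sum>i\<le>a. \<Sum>M\<in>A. F l i M) = (\<Sum>l\<le>b. \<Sum>M\<in>A. \<Sum>i\<le>a. F l i M)"
    by (rule sum.cong[OF refl]) (rule sum.swap)
  also have "\<dots> = (\<Sum>M\<in>A. \<Sum>l\<le>b. \<Sum>i\<le>a. F l i M)" by (rule sum.swap)
  also have "\<dots> = (\<Sum>M\<in>A. \<Sum>i\<le>a. \<Sum>l\<le>b. F l i M)"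
    by (rule sum.cong[OF refl]) (rule sum.swap)
  finally show ?thesis .
qed

lemma S0_formula:
  "S0 N (a + b + 2 * c + 2) (b + c + 1) (c + 1) =
    (\<Sum>M\<in>{1..<N}. \<Sum>i\<le>a. \<Sum>l\<le>b. Wc M (a - i) (b - l) c / real M ^ (i + 2) * Hs N M l)"
proof -
  have inj: "inj_on (\<lambda>(l, i, ks). (ks @ [i + 2::nat], l)) (SIGMA l:{..b}. SIGMA i:{..a}. Comp (a - i) (b - l) c)"
    by (auto simp: inj_on_def)
  have "S0 N (a + b + 2 * c + 2) (b + c + 1) (c + 1) =
      (\<Sum>(l, i, ks)\<in>(SIGMA l:{..b}. SIGMA i:{..a}. Comp (a - i) (b - l) c). tzetaN N (ks @ [i + 2]) l)"
    unfolding S0_def I0_eq by (subst sum.reindex[OF inj]) (simp add: case_prod_beta)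
  also have "\<dots> = (\<Sum>l\<le>b. \<Sum>i\<le>a. \<Sum>ks\<in>Comp (a - i) (b - l) c. tzetaN N (ks @ [i + 2]) l)"
    by (simp add: sum.Sigma finite_Comp split_def)
  also have "\<dots> = (\<Sum>l\<le>b. \<Sum>i\<le>a. \<Sum>M\<in>{1..<N}. Wc M (a - i) (b - l) c / real M ^ (i + 2) * Hs N M l)"
    unfolding tzeta_snoc Wc_def
    by (subst sum.swap) (simp add: sum_divide_distrib sum_distrib_right)
  also have "\<dots> = (\<Sum>M\<in>{1..<N}. \<Sum>i\<le>a. \<Sum>l\<le>b. Wc M (a - i) (b - l) c / real M ^ (i + 2) * Hs N M l)"
    by (rule sum3_swap)
  finally show ?thesis .
qed


definition X3 :: F3 where "X3 = mono3 1 0 0"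
definition Y3 :: F3 where "Y3 = mono3 0 1 0"
definition Z3 :: F3 where "Z3 = mono3 0 0 1"

definition gx :: "nat \<Rightarrow> F3" where "gx m = pureX (\<lambda>a. 1 / real m ^ (a + 1))"
definition gy :: "nat \<Rightarrow> F3" where "gy m = pureY (\<lambda>b. 1 / real m ^ (b + 1))"

lemma cf_X3_mult: "cf (X3 * f) a b c = (if 1 \<le> a then cf f (a - 1) b c else 0)"
  by (simp add: X3_def cf_mono3_mult)
lemma cf_Y3_mult: "cf (Y3 * f) a b c = (if 1 \<le> b then cf f a (b - 1) c else 0)"
  by (simp add: Y3_def cf_mono3_mult)
lemma cf_Z3_mult: "cf (Z3 * f) a b c = (if 1 \<le> c then cf f a b (c - 1) else 0)"
  by (simp add: Z3_def cf_mono3_mult)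

lemma cf_pureX: "cf (pureX u) a b c = (if b = 0 \<and> c = 0 then u a else 0)"
  by (simp add: pureX_def)
lemma cf_pureY: "cf (pureY u) a b c = (if a = 0 \<and> c = 0 then u b else 0)"
  by (simp add: pureY_def)

lemma of_nat_F3: "(of_nat m :: F3) = cst (real m)"
  by (simp add: cst_of_nat)

lemma gx_inv: "m \<ge> 1 \<Longrightarrow> (of_nat m - X3) * gx m = 1"
proof (intro F3_eqI)
  fix a b c assume m: "m \<ge> 1"
  have "cf ((of_nat m - X3) * gx m) a b c = real m * cf (gx m) a b c - cf (X3 * gx m) a b c"
    by (simp add: left_diff_distrib of_nat_F3 cf_cst_mult)
  also have "\<dots> = cf 1 a b c"
    using m by (cases a) (auto simp: cf_X3_mult gx_def cf_pureX cf_one field_simps)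
  finally show "cf ((of_nat m - X3) * gx m) a b c = cf 1 a b c" .
qed

lemma gy_inv: "m \<ge> 1 \<Longrightarrow> (of_nat m - Y3) * gy m = 1"
proof (intro F3_eqI)
  fix a b c assume m: "m \<ge> 1"
  have "cf ((of_nat m - Y3) * gy m) a b c = real m * cf (gy m) a b c - cf (Y3 * gy m) a b c"
    by (simp add: left_diff_distrib of_nat_F3 cf_cst_mult)
  also have "\<dots> = cf 1 a b c"
    using m by (cases b) (auto simp: cf_Y3_mult gy_def cf_pureY cf_one field_simps)
  finally show "cf ((of_nat m - Y3) * gy m) a b c = cf 1 a b c" .
qed

lemma cst_inv: "m \<ge> 1 \<Longrightarrow> cst (1 / real m) * of_nat m = 1"
  by (simp add: of_nat_F3 cst_mult[symmetric])

definition Am :: "nat \<Rightarrow> F3" where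
  "Am m = 1 + cst (1 / real m) * Y3 + cst (1 / real m) * (Z3 * gx m)"
definition Bn :: "nat \<Rightarrow> F3" where
  "Bn n = 1 + (Z3 - X3 * Y3) * (gx n * gy n)"
definition Wg :: "nat \<Rightarrow> F3" where
  "Wg M = (\<Prod>m\<in>{1..<M}. Am m)"
definition Hg :: "nat \<Rightarrow> nat \<Rightarrow> F3" where
  "Hg N M = (\<Prod>n\<in>{1..M}. cst (real (N - n)) * gy (N - n))"
definition Gen :: "nat \<Rightarrow> F3" where
  "Gen N = (\<Sum>M\<in>{1..<N}. (cst (1 / real M) * gx M) * (Hg N M * Wg M))"
definition En :: "nat \<Rightarrow> F3" where
  "En N = (\<Prod>n\<in>{1..<N}. Bn n)"


lemma pureY_mult: "pureY u * pureY v = pureY (\<lambda>b. \<Sum>j\<le>b. u j * v (b - j))"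
  by (rule F3_eqI) (simp add: cf_pureY_mult cf_pureY if_distrib cong: if_cong)

lemma cst_gy: "cst r * gy j = pureY (\<lambda>b. r / real j ^ (b + 1))"
  by (rule F3_eqI) (simp add: cf_cst_mult gy_def cf_pureY)

lemma cst_gx: "cst r * gx j = pureX (\<lambda>a. r / real j ^ (a + 1))"
  by (rule F3_eqI) (simp add: cf_cst_mult gx_def cf_pureX)

lemma pureY_one: "pureY (\<lambda>b. if b = 0 then 1 else 0) = 1"
  by (rule F3_eqI) (simp add: cf_pureY cf_one)

lemma Hs_M0: "Hs N 0 l = (if l = 0 then 1 else 0)"
proof (cases l)
  case (Suc l')
  have "weak_tuples 0 l = {}" using Suc unfolding weak_tuples_def by (auto simp: length_Suc_conv)
  thus ?thesis using Suc by (simp add: Hs_def)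
qed simp

lemma Hg_pure: "M < N \<Longrightarrow> Hg N M = pureY (Hs N M)"
proof (induction M)
  case 0
  then show ?case by (simp add: Hg_def Hs_M0 pureY_one)
next
  case (Suc M)
  define j where "j = N - Suc M"
  have j1: "j \<ge> 1" using Suc.prems by (simp add: j_def)
  have "Hg N (Suc M) = (cst (real j) * gy j) * Hg N M"
    by (simp add: Hg_def prod.cl_ivl_Suc j_def mult.commute)
  also have "\<dots> = pureY (\<lambda>b. real j / real j ^ (b + 1)) * pureY (Hs N M)"
    using Suc by (simp add: cst_gy)
  also have "\<dots> = pureY (Hs N (Suc M))"
  proof -
    have "\<And>b. (\<Sum>i\<le>b. real j / real j ^ (i + 1) * Hs N M (b - i)) = Hs N (Suc M) b"
      using j1 by (simp add: Hs_conv j_def[symmetric] field_simps)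
    thus ?thesis by (simp add: pureY_mult)
  qed
  finally show ?case .
qed

lemma incr_tuples_small: "M \<le> 1 \<Longrightarrow> r \<ge> 1 \<Longrightarrow> incr_tuples M r = {}"
  unfolding incr_tuples_def by (cases r) (auto simp: length_Suc_conv)

lemma Wc_small: "M \<le> 1 \<Longrightarrow> Wc M a b c = (if a = 0 \<and> b = 0 \<and> c = 0 then 1 else 0)"
proof -
  assume M: "M \<le> 1"
  have "Wsum M ks = (if ks = [] then 1 else 0)" for ks
  proof (cases ks)
    case (Cons k ks')
    hence "incr_tuples M (length ks) = {}" using incr_tuples_small[OF M] by simp
    thus ?thesis using Cons by (simp add: Wsum_def)
  qed simp
  hence "Wc M a b c = (\<Sum>ks\<in>Comp a b c. if ks = [] then 1 else 0)" by (simp add: Wc_def)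
  also have "\<dots> = (if [] \<in> Comp a b c then 1 else 0)" by (simp add: finite_Comp)
  finally show ?thesis by (simp add: Comp_nil)
qed

lemma cf_Am_mult: "cf (Am M * f) a b c = cf f a b c + (if 1 \<le> b then cf f a (b - 1) c / real M else 0)
   + (if 1 \<le> c then (\<Sum>i\<le>a. cf f (a - i) b (c - 1) / real M ^ (i + 2)) else 0)"
proof -
  have "Am M * f = f + cst (1 / real M) * (Y3 * f) + Z3 * ((cst (1 / real M) * gx M) * f)"
    by (simp add: Am_def algebra_simps)
  hence "cf (Am M * f) a b c = cf f a b c + cf (cst (1 / real M) * (Y3 * f)) a b c + cf (Z3 * ((cst (1 / real M) * gx M) * f)) a b c"
    by simp
  also have "cf (cst (1 / real M) * (Y3 * f)) a b c = (if 1 \<le> b then cf f a (b - 1) c / real M else 0)"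
    by (simp add: cf_cst_mult cf_Y3_mult)
  also have "cf (Z3 * ((cst (1 / real M) * gx M) * f)) a b c =
      (if 1 \<le> c then (\<Sum>i\<le>a. cf f (a - i) b (c - 1) / real M ^ (i + 2)) else 0)"
    unfolding cst_gx cf_Z3_mult cf_pureX_mult by simp
  finally show ?thesis .
qed

lemma Wg_cf: "cf (Wg M) a b c = Wc M a b c"
proof (induction M arbitrary: a b c)
  case 0
  then show ?case by (simp add: Wg_def Wc_small cf_one)
next
  case (Suc M)
  show ?case
  proof (cases "M = 0")
    case True
    then show ?thesis by (simp add: Wg_def Wc_small cf_one)
  next
    case False
    hence M1: "M \<ge> 1" by simp
    have "Wg (Suc M) = Am M * Wg M"
      using M1 by (simp add: Wg_def prod.atLeastLessThan_Suc mult.commute)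
    hence "cf (Wg (Suc M)) a b c = cf (Am M * Wg M) a b c" by simp
    also have "\<dots> = Wc (Suc M) a b c"
      unfolding cf_Am_mult Suc.IH Wc_rec[OF M1] by simp
    finally show ?thesis .
  qed
qed

lemma Gen_cf: "cf (Gen N) a b c = S0 N (a + b + 2 * c + 2) (b + c + 1) (c + 1)"
proof -
  have "cf (Gen N) a b c = (\<Sum>M\<in>{1..<N}. cf (pureX (\<lambda>i. 1 / real M ^ (i + 1 + 1)) * (pureY (Hs N M) * Wg M)) a b c)"
    unfolding Gen_def cf_sum
    by (intro sum.cong refl) (simp add: Hg_pure cst_gx mult.assoc)
  also have "\<dots> = (\<Sum>M\<in>{1..<N}. \<Sum>i\<le>a. \<Sum>l\<le>b. Wc M (a - i) (b - l) c / real M ^ (i + 2) * Hs N M l)"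
    unfolding cf_pureX_mult cf_pureY_mult Wg_cf by (simp add: sum_distrib_left mult_ac)
  also have "\<dots> = S0 N (a + b + 2 * c + 2) (b + c + 1) (c + 1)"
    by (rule S0_formula[symmetric])
  finally show ?thesis .
qed


type_synonym K3 = "F3 fract"

definition iota :: "F3 \<Rightarrow> K3" where "iota f = Fract f 1"

lemma iota_add: "iota (f + g) = iota f + iota g" by (simp add: iota_def)
lemma iota_mult: "iota (f * g) = iota f * iota g" by (simp add: iota_def)
lemma iota_diff: "iota (f - g) = iota f - iota g" by (simp add: iota_def)
lemma iota_one: "iota 1 = 1" by (simp add: iota_def One_fract_def)
lemma iota_zero: "iota 0 = 0" by (simp add: iota_def Zero_fract_def)
lemma iota_of_nat: "iota (of_nat n) = of_nat n" by (simp add: iota_def Fract_of_nat_eq)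
lemma iota_inj: "iota f = iota g \<Longrightarrow> f = g" by (simp add: iota_def eq_fract)

lemma iota_sum: "iota (sum f S) = (\<Sum>s\<in>S. iota (f s))"
  by (induction S rule: infinite_finite_induct) (auto simp: iota_zero iota_add)
lemma iota_prod: "iota (prod f S) = (\<Prod>s\<in>S. iota (f s))"
  by (induction S rule: infinite_finite_induct) (auto simp: iota_one iota_mult)

lemma iota_inv: "u * v = 1 \<Longrightarrow> iota v = 1 / iota u"
proof -
  assume "u * v = 1"
  hence "iota u * iota v = 1" by (metis iota_mult iota_one)
  thus ?thesis by (auto simp: eq_divide_eq mult.commute)
qed

lemma cf_X3: "cf X3 a b c = (if a = 1 \<and> b = 0 \<and> c = 0 then 1 else 0)" by (simp add: X3_def mono3_def)
lemma cf_Y3: "cf Y3 a b c = (if a = 0 \<and> b = 1 \<and> c = 0 then 1 else 0)" by (simp add: Y3_def mono3_def)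

lemma ne_x: "m \<ge> 1 \<Longrightarrow> of_nat m \<noteq> iota X3"
proof
  assume m: "m \<ge> 1" and e: "of_nat m = iota X3"
  hence "iota (of_nat m) = iota X3" by (simp add: iota_of_nat)
  hence "of_nat m = X3" by (rule iota_inj)
  hence "cf (of_nat m) 0 0 0 = cf X3 0 0 0" by simp
  thus False using m by (simp add: cf_of_nat cf_X3)
qed

lemma ne_y: "m \<ge> 1 \<Longrightarrow> of_nat m \<noteq> iota Y3"
proof
  assume m: "m \<ge> 1" and e: "of_nat m = iota Y3"
  hence "iota (of_nat m) = iota Y3" by (simp add: iota_of_nat)
  hence "of_nat m = Y3" by (rule iota_inj)
  hence "cf (of_nat m) 0 0 0 = cf Y3 0 0 0" by simp
  thus False using m by (simp add: cf_of_nat cf_Y3)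
qed

lemma ne_0: "m \<ge> 1 \<Longrightarrow> (of_nat m :: K3) \<noteq> 0"
proof
  assume m: "m \<ge> 1" and e: "(of_nat m :: K3) = 0"
  hence "iota (of_nat m) = iota 0" by (simp add: iota_of_nat iota_zero)
  hence "(of_nat m :: F3) = 0" by (rule iota_inj)
  hence "cf (of_nat m) 0 0 0 = cf 0 0 0 0" by simp
  thus False using m by (simp add: cf_of_nat)
qed

abbreviation "xK \<equiv> iota X3"
abbreviation "yK \<equiv> iota Y3"
abbreviation "zK \<equiv> iota Z3"

lemma iota_gx: "m \<ge> 1 \<Longrightarrow> iota (gx m) = 1 / (of_nat m - xK)"
  using iota_inv[OF gx_inv] by (simp add: iota_diff iota_of_nat)
lemma iota_gy: "m \<ge> 1 \<Longrightarrow> iota (gy m) = 1 / (of_nat m - yK)"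
  using iota_inv[OF gy_inv] by (simp add: iota_diff iota_of_nat)
lemma iota_cst_inv: "m \<ge> 1 \<Longrightarrow> iota (cst (1 / real m)) = 1 / of_nat m"
  using iota_inv[OF cst_inv] by (simp add: iota_of_nat)
lemma iota_cst_nat: "iota (cst (real m)) = of_nat m"
  by (simp add: cst_of_nat iota_of_nat)

lemma AAe: "AA xK yK zK m = 1 + yK / of_nat m + zK / (of_nat m * (of_nat m - xK))"
  by (rule AA_def) (simp_all add: ne_x ne_y ne_0)
lemma BBe: "BB xK yK zK n = 1 + (zK - xK * yK) / ((of_nat n - xK) * (of_nat n - yK))"
  by (rule BB_def) (simp_all add: ne_x ne_y ne_0)
lemma Wpe: "Wp yK N M = (\<Prod>n\<in>{1..M}. of_nat (N - n) / (of_nat (N - n) - yK))"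
  by (rule Wp_def[where x=xK]) (simp_all add: ne_x ne_y ne_0)

lemma iota_Am: "m \<ge> 1 \<Longrightarrow> iota (Am m) = AA xK yK zK m"
  unfolding AAe Am_def
  by (simp add: iota_add iota_mult iota_one iota_gx iota_cst_inv)

lemma iota_Bn: "n \<ge> 1 \<Longrightarrow> iota (Bn n) = BB xK yK zK n"
  unfolding BBe Bn_def
  by (simp add: iota_add iota_mult iota_diff iota_one iota_gx iota_gy)

lemma iota_Wg: "iota (Wg M) = (\<Prod>m\<in>{1..<M}. AA xK yK zK m)"
  unfolding Wg_def iota_prod by (intro prod.cong refl) (simp add: iota_Am)

lemma iota_Hg: "M < N \<Longrightarrow> iota (Hg N M) = Wp yK N M"
  unfolding Wpe Hg_def iota_prod
proof (intro prod.cong refl)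
  fix n assume "M < N" "n \<in> {1..M}"
  hence h: "N - n \<ge> 1" by auto
  show "iota (cst (real (N - n)) * gy (N - n)) = of_nat (N - n) / (of_nat (N - n) - yK)"
    by (simp only: iota_mult iota_cst_nat iota_gy[OF h]) simp
qed

lemma iota_En: "iota (En N) = (\<Prod>n\<in>{1..<N}. BB xK yK zK n)"
  unfolding En_def iota_prod by (intro prod.cong refl) (simp add: iota_Bn)

lemma main_identity:
  assumes "N \<ge> 1"
  shows "1 + (Z3 - X3 * Y3) * Gen N = En N"
proof (rule iota_inj)
  have "iota (Gen N) = (\<Sum>M\<in>{1..<N}. 1 / (of_nat M * (of_nat M - xK)) * (\<Prod>m\<in>{1..<M}. AA xK yK zK m) * Wp yK N M)"
    unfolding Gen_def iota_sum
    by (intro sum.cong refl) (simp add: iota_mult iota_cst_inv iota_gx iota_Hg iota_Wg)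
  hence "iota (1 + (Z3 - X3 * Y3) * Gen N) = 1 + (zK - xK * yK) * (\<Sum>M\<in>{1..<N}. 1 / (of_nat M * (of_nat M - xK)) * (\<Prod>m\<in>{1..<M}. AA xK yK zK m) * Wp yK N M)"
    by (simp add: iota_add iota_mult iota_diff iota_one)
  also have "\<dots> = (\<Prod>n\<in>{1..<N}. BB xK yK zK n)"
    by (rule saal_final[OF ne_x ne_y ne_0 assms])
  also have "\<dots> = iota (En N)" by (simp add: iota_En)
  finally show "iota (1 + (Z3 - X3 * Y3) * Gen N) = iota (En N)" .
qed


definition WH :: "nat \<Rightarrow> (nat \<Rightarrow> real) \<Rightarrow> bool" where
  "WH w f \<longleftrightarrow> (\<exists>c. \<forall>N>0. f N = eval_whpoly w c (\<lambda>j. zetaN N j))"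

definition mon :: "nat \<Rightarrow> (nat \<Rightarrow> nat) \<Rightarrow> (nat \<Rightarrow> real) \<Rightarrow> real" where
  "mon k e Z = (\<Prod>j\<in>{2..k}. Z j ^ e j)"

lemma eval_mon: "eval_whpoly k c Z = (\<Sum>e\<in>wmonomials k. of_rat (c e) * mon k e Z)"
  by (simp add: eval_whpoly_def mon_def)

lemma wm_supp: "e \<in> wmonomials k \<Longrightarrow> e j \<noteq> 0 \<Longrightarrow> 2 \<le> j \<and> j \<le> k"
  by (simp add: wmonomials_def)

lemma wm_sum: "e \<in> wmonomials k \<Longrightarrow> (\<Sum>j\<in>{2..k}. j * e j) = k"
  by (simp add: wmonomials_def)

lemma finite_wm: "finite (wmonomials k)"
proof -
  have "wmonomials k \<subseteq> {e. \<forall>j. (j \<in> {2..k} \<longrightarrow> e j \<in> {0..k}) \<and> (j \<notin> {2..k} \<longrightarrow> e j = 0)}"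
  proof (intro subsetI CollectI allI conjI impI)
    fix e j assume e: "e \<in> wmonomials k"
    { assume j: "j \<in> {2..k}"
      have "j * e j \<le> (\<Sum>i\<in>{2..k}. i * e i)" by (rule member_le_sum) (use j in auto)
      hence "j * e j \<le> k" using wm_sum[OF e] by simp
      moreover have "j * e j = e j + (j - 1) * e j" using j by (cases j) auto
      ultimately show "e j \<in> {0..k}" by simp }
    { assume "j \<notin> {2..k}" thus "e j = 0" using wm_supp[OF e, of j] by auto }
  qed
  thus ?thesis using finite_set_of_finite_funs[of "{2..k}" "{0..k}" 0] finite_subset by blast
qed

lemma mon_extend:
  assumes "e \<in> wmonomials k" "k \<le> K"
  shows "(\<Prod>j\<in>{2..K}. Z j ^ e j) = mon k e Z"
  unfolding mon_def
proof (rule prod.mono_neutral_right)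
  show "\<forall>i\<in>{2..K} - {2..k}. Z i ^ e i = 1"
  proof
    fix i assume "i \<in> {2..K} - {2..k}"
    hence "e i = 0" using wm_supp[OF assms(1), of i] by auto
    thus "Z i ^ e i = 1" by simp
  qed
qed (use assms in auto)

lemma sum_extend:
  assumes "e \<in> wmonomials k" "k \<le> K"
  shows "(\<Sum>j\<in>{2..K}. j * e j) = k"
proof -
  have "(\<Sum>j\<in>{2..K}. j * e j) = (\<Sum>j\<in>{2..k}. j * e j)"
  proof (rule sum.mono_neutral_right)
    show "\<forall>i\<in>{2..K} - {2..k}. i * e i = 0"
    proof
      fix i assume "i \<in> {2..K} - {2..k}"
      hence "e i = 0" using wm_supp[OF assms(1), of i] by auto
      thus "i * e i = 0" by simp
    qed
  qed (use assms in auto)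
  thus ?thesis using wm_sum[OF assms(1)] by simp
qed

lemma wm_add:
  assumes "e1 \<in> wmonomials a" "e2 \<in> wmonomials b"
  shows "(\<lambda>j. e1 j + e2 j) \<in> wmonomials (a + b)"
proof -
  have "\<forall>j. e1 j + e2 j \<noteq> 0 \<longrightarrow> 2 \<le> j \<and> j \<le> a + b"
    using wm_supp[OF assms(1)] wm_supp[OF assms(2)] by fastforce
  moreover have "(\<Sum>j\<in>{2..a + b}. j * (e1 j + e2 j)) = a + b"
    using sum_extend[OF assms(1), of "a + b"] sum_extend[OF assms(2), of "a + b"]
    by (simp add: distrib_left sum.distrib)
  ultimately show ?thesis by (simp add: wmonomials_def)
qed

lemma mon_add:
  assumes "e1 \<in> wmonomials a" "e2 \<in> wmonomials b"
  shows "mon (a + b) (\<lambda>j. e1 j + e2 j) Z = mon a e1 Z * mon b e2 Z"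
proof -
  have "mon (a + b) (\<lambda>j. e1 j + e2 j) Z = (\<Prod>j\<in>{2..a + b}. Z j ^ e1 j) * (\<Prod>j\<in>{2..a + b}. Z j ^ e2 j)"
    by (simp add: mon_def power_add prod.distrib)
  also have "\<dots> = mon a e1 Z * mon b e2 Z"
    using mon_extend[OF assms(1), of "a + b"] mon_extend[OF assms(2), of "a + b"] by simp
  finally show ?thesis .
qed

lemma eval_mult:
  "eval_whpoly a c1 Z * eval_whpoly b c2 Z =
   eval_whpoly (a + b) (\<lambda>e. \<Sum>p\<in>{p\<in>wmonomials a \<times> wmonomials b. (\<lambda>j. fst p j + snd p j) = e}. c1 (fst p) * c2 (snd p)) Z"
proof -
  let ?P = "wmonomials a \<times> wmonomials b"
  let ?g = "\<lambda>p. (\<lambda>j. fst p j + snd p j)"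
  let ?h = "\<lambda>p. of_rat (c1 (fst p) * c2 (snd p)) * mon (a + b) (?g p) Z"
  have finP: "finite ?P" by (simp add: finite_wm)
  have gP: "?g ` ?P \<subseteq> wmonomials (a + b)" using wm_add by auto
  have "eval_whpoly (a + b) (\<lambda>e. \<Sum>p\<in>{p\<in>?P. ?g p = e}. c1 (fst p) * c2 (snd p)) Z =
      (\<Sum>e\<in>wmonomials (a + b). \<Sum>p\<in>{p\<in>?P. ?g p = e}. ?h p)"
    unfolding eval_mon of_rat_sum sum_distrib_right
    by (intro sum.cong refl) auto
  also have "\<dots> = (\<Sum>p\<in>?P. ?h p)"
    by (rule sum.group[OF finP finite_wm gP])
  also have "\<dots> = (\<Sum>p\<in>?P. (of_rat (c1 (fst p)) * mon a (fst p) Z) * (of_rat (c2 (snd p)) * mon b (snd p) Z))"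
    by (intro sum.cong refl) (auto simp: mon_add of_rat_mult)
  also have "\<dots> = eval_whpoly a c1 Z * eval_whpoly b c2 Z"
    unfolding eval_mon sum_product sum.cartesian_product by (simp add: case_prod_beta)
  finally show ?thesis by simp
qed

lemma WH_mult: "WH a f \<Longrightarrow> WH b g \<Longrightarrow> WH (a + b) (\<lambda>N. f N * g N)"
proof -
  assume "WH a f" "WH b g"
  then obtain c1 c2 where c1: "\<forall>N>0. f N = eval_whpoly a c1 (\<lambda>j. zetaN N j)"
    and c2: "\<forall>N>0. g N = eval_whpoly b c2 (\<lambda>j. zetaN N j)" unfolding WH_def by blast
  show ?thesis unfolding WH_def
    by (rule exI, intro allI impI) (simp add: c1 c2 eval_mult)
qed

lemma eval_add: "eval_whpoly w c1 Z + eval_whpoly w c2 Z = eval_whpoly w (\<lambda>e. c1 e + c2 e) Z"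
  by (simp add: eval_whpoly_def of_rat_add distrib_right sum.distrib)

lemma eval_scale: "of_rat r * eval_whpoly w c Z = eval_whpoly w (\<lambda>e. r * c e) Z"
  by (simp add: eval_whpoly_def of_rat_mult sum_distrib_left mult.assoc)

lemma WH_add: "WH w f \<Longrightarrow> WH w g \<Longrightarrow> WH w (\<lambda>N. f N + g N)"
proof -
  assume "WH w f" "WH w g"
  then obtain c1 c2 where c1: "\<forall>N>0. f N = eval_whpoly w c1 (\<lambda>j. zetaN N j)"
    and c2: "\<forall>N>0. g N = eval_whpoly w c2 (\<lambda>j. zetaN N j)" unfolding WH_def by blast
  show ?thesis unfolding WH_def
    by (rule exI, intro allI impI) (simp add: c1 c2 eval_add)
qed

lemma WH_scale: "WH w f \<Longrightarrow> WH w (\<lambda>N. of_rat r * f N)"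
proof -
  assume "WH w f"
  then obtain c1 where c1: "\<forall>N>0. f N = eval_whpoly w c1 (\<lambda>j. zetaN N j)"
    unfolding WH_def by blast
  show ?thesis unfolding WH_def
    by (rule exI, intro allI impI) (simp add: c1 eval_scale)
qed

lemma WH_zero: "WH w (\<lambda>N. 0)"
  unfolding WH_def by (rule exI[of _ "\<lambda>_. 0"]) (simp add: eval_whpoly_def)

lemma WH_cong: "WH w f \<Longrightarrow> (\<And>N. N > 0 \<Longrightarrow> g N = f N) \<Longrightarrow> WH w g"
  unfolding WH_def by auto

lemma WH_sum: "(\<And>s. s \<in> S \<Longrightarrow> WH w (f s)) \<Longrightarrow> WH w (\<lambda>N. \<Sum>s\<in>S. f s N)"
proof (induction S rule: infinite_finite_induct)
  case (infinite A)
  then show ?case by (simp add: WH_zero)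
next
  case empty
  then show ?case by (simp add: WH_zero)
next
  case (insert x F)
  then show ?case by (simp add: WH_add)
qed

lemma WH_Rats_scale: "r \<in> \<rat> \<Longrightarrow> WH w f \<Longrightarrow> WH w (\<lambda>N. r * f N)"
proof -
  assume "r \<in> \<rat>" "WH w f"
  then obtain q where "r = of_rat q" by (auto elim: Rats_cases)
  thus ?thesis using WH_scale[OF \<open>WH w f\<close>, of q] by simp
qed

lemma WH_neg: "WH w f \<Longrightarrow> WH w (\<lambda>N. - f N)"
  using WH_scale[of w f "-1"] by simp

lemma wm_0: "wmonomials 0 = {\<lambda>_. 0}"
proof (intro equalityI subsetI)
  fix e assume e: "e \<in> wmonomials 0"
  have "e j = 0" for j by (cases "e j = 0") (use wm_supp[OF e, of j] in auto)
  thus "e \<in> {\<lambda>_. 0}" by auto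
qed (auto simp: wmonomials_def)

lemma WH_one: "WH 0 (\<lambda>N. 1)"
  unfolding WH_def eval_whpoly_def wm_0 by (rule exI[of _ "\<lambda>_. 1"]) simp

lemma WH_zeta:
  assumes j: "2 \<le> j"
  shows "WH j (\<lambda>N. zetaN N j)"
proof -
  define d where "d = (\<lambda>i::nat. if i = j then 1 else (0::nat))"
  have dw: "d \<in> wmonomials j"
  proof -
    have "(\<Sum>i\<in>{2..j}. i * d i) = (\<Sum>i\<in>{2..j}. if i = j then j else 0)"
      by (intro sum.cong refl) (simp add: d_def)
    also have "\<dots> = j" using j by simp
    finally show ?thesis using j by (simp add: wmonomials_def d_def)
  qed
  have "eval_whpoly j (\<lambda>e. if e = d then 1 else 0) Z = mon j d Z" for Z
  proof -
    have "eval_whpoly j (\<lambda>e. if e = d then 1 else 0) Z = (\<Sum>e\<in>wmonomials j. if e = d then mon j d Z else 0)"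
      unfolding eval_mon by (intro sum.cong refl) auto
    also have "\<dots> = mon j d Z" using dw finite_wm by simp
    finally show ?thesis .
  qed
  moreover have "mon j d Z = Z j" for Z
  proof -
    have "mon j d Z = (\<Prod>i\<in>{2..j}. if i = j then Z j else 1)"
      unfolding mon_def by (intro prod.cong refl) (simp add: d_def)
    also have "\<dots> = Z j" using j by simp
    finally show ?thesis .
  qed
  ultimately have "\<forall>N>0. zetaN N j = eval_whpoly j (\<lambda>e. if e = d then 1 else 0) (\<lambda>j. zetaN N j)"
    by simp
  thus ?thesis unfolding WH_def by blast
qed


definition Dop :: "F3 \<Rightarrow> F3" where
  "Dop f = mk3 (\<lambda>a b c. real (a + b + 2 * c) * cf f a b c)"
definition Sc :: "real \<Rightarrow> F3 \<Rightarrow> F3" where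
  "Sc t f = mk3 (\<lambda>a b c. t ^ (a + b + 2 * c) * cf f a b c)"
definition Sw :: "F3 \<Rightarrow> F3" where
  "Sw f = mk3 (\<lambda>a b c. cf f b a c)"

lemma sum3_add:
  "(\<Sum>i\<le>(a::nat). \<Sum>j\<le>(b::nat). \<Sum>k\<le>(c::nat). P i j k) + (\<Sum>i\<le>a. \<Sum>j\<le>b. \<Sum>k\<le>c. Q i j k) =
   (\<Sum>i\<le>a. \<Sum>j\<le>b. \<Sum>k\<le>c. P i j k + (Q i j k :: real))"
  by (simp add: sum.distrib)

lemma aux1: "(w::real) = w1 + w2 \<Longrightarrow> w1 * F * G + F * (w2 * G) = w * (F * G)"
  by (simp add: algebra_simps)
lemma aux2: "(T::real) = T1 * T2 \<Longrightarrow> T1 * F * (T2 * G) = T * (F * G)"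
  by simp

lemma Dop_mult: "Dop (f * g) = Dop f * g + f * Dop g"
proof (rule F3_eqI)
  fix a b c
  have "cf (Dop f * g + f * Dop g) a b c =
     (\<Sum>i\<le>a. \<Sum>j\<le>b. \<Sum>k\<le>c. real (i + j + 2 * k) * cf f i j k * cf g (a - i) (b - j) (c - k)
        + cf f i j k * (real ((a - i) + (b - j) + 2 * (c - k)) * cf g (a - i) (b - j) (c - k)))"
    unfolding cf_add cf_mult Dop_def cf_mk3 sum3_add ..
  also have "\<dots> = (\<Sum>i\<le>a. \<Sum>j\<le>b. \<Sum>k\<le>c. real (a + b + 2 * c) * (cf f i j k * cf g (a - i) (b - j) (c - k)))"
  proof (intro sum.cong refl)
    fix i j k assume "i \<in> {..a}" "j \<in> {..b}" "k \<in> {..c}"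
    hence "i \<le> a" "j \<le> b" "k \<le> c" by auto
    hence E: "a + b + 2 * c = (i + j + 2 * k) + ((a - i) + (b - j) + 2 * (c - k))" by arith
    have W: "real (a + b + 2 * c) = real (i + j + 2 * k) + real ((a - i) + (b - j) + 2 * (c - k))"
      by (subst E) (rule of_nat_add)
    show "real (i + j + 2 * k) * cf f i j k * cf g (a - i) (b - j) (c - k)
        + cf f i j k * (real ((a - i) + (b - j) + 2 * (c - k)) * cf g (a - i) (b - j) (c - k)) =
        real (a + b + 2 * c) * (cf f i j k * cf g (a - i) (b - j) (c - k))"
      by (rule aux1[OF W])
  qed
  also have "\<dots> = cf (Dop (f * g)) a b c"
    by (simp add: Dop_def cf_mult sum_distrib_left)
  finally show "cf (Dop (f * g)) a b c = cf (Dop f * g + f * Dop g) a b c" ..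
qed

lemma Sc_mult: "Sc t (f * g) = Sc t f * Sc t g"
proof (rule F3_eqI)
  fix a b c
  have "cf (Sc t f * Sc t g) a b c =
     (\<Sum>i\<le>a. \<Sum>j\<le>b. \<Sum>k\<le>c. t ^ (i + j + 2 * k) * cf f i j k * (t ^ ((a - i) + (b - j) + 2 * (c - k)) * cf g (a - i) (b - j) (c - k)))"
    unfolding cf_mult Sc_def cf_mk3 ..
  also have "\<dots> = (\<Sum>i\<le>a. \<Sum>j\<le>b. \<Sum>k\<le>c. t ^ (a + b + 2 * c) * (cf f i j k * cf g (a - i) (b - j) (c - k)))"
  proof (intro sum.cong refl)
    fix i j k assume "i \<in> {..a}" "j \<in> {..b}" "k \<in> {..c}"
    hence "i \<le> a" "j \<le> b" "k \<le> c" by auto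
    hence E: "a + b + 2 * c = (i + j + 2 * k) + ((a - i) + (b - j) + 2 * (c - k))" by arith
    have W: "t ^ (a + b + 2 * c) = t ^ (i + j + 2 * k) * t ^ ((a - i) + (b - j) + 2 * (c - k))"
      by (subst E) (rule power_add)
    show "t ^ (i + j + 2 * k) * cf f i j k * (t ^ ((a - i) + (b - j) + 2 * (c - k)) * cf g (a - i) (b - j) (c - k)) =
        t ^ (a + b + 2 * c) * (cf f i j k * cf g (a - i) (b - j) (c - k))"
      by (rule aux2[OF W])
  qed
  also have "\<dots> = cf (Sc t (f * g)) a b c"
    by (simp add: Sc_def cf_mult sum_distrib_left)
  finally show "cf (Sc t (f * g)) a b c = cf (Sc t f * Sc t g) a b c" ..
qed

lemma Dop_Sc: "Dop (Sc t f) = Sc t (Dop f)"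
  by (rule F3_eqI) (simp add: Dop_def Sc_def)

lemma Sw_mult: "Sw (f * g) = Sw f * Sw g"
proof (rule F3_eqI)
  fix a b c
  have "cf (Sw (f * g)) a b c = (\<Sum>i\<le>b. \<Sum>j\<le>a. \<Sum>k\<le>c. cf f i j k * cf g (b - i) (a - j) (c - k))"
    by (simp add: Sw_def cf_mult)
  also have "\<dots> = (\<Sum>j\<le>a. \<Sum>i\<le>b. \<Sum>k\<le>c. cf f i j k * cf g (b - i) (a - j) (c - k))"
    by (rule sum.swap)
  also have "\<dots> = cf (Sw f * Sw g) a b c"
    by (simp add: Sw_def cf_mult)
  finally show "cf (Sw (f * g)) a b c = cf (Sw f * Sw g) a b c" .
qed

lemma Sw_one: "Sw 1 = 1"
  by (rule F3_eqI) (simp add: Sw_def cf_one)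

lemma Sw_prod: "Sw (prod f S) = (\<Prod>s\<in>S. Sw (f s))"
  by (induction S rule: infinite_finite_induct) (auto simp: Sw_one Sw_mult)

lemma cf_gxgy: "cf (gx n * gy n) a b c = (if c = 0 then 1 / real n ^ (a + 1) * (1 / real n ^ (b + 1)) else 0)"
proof -
  have "cf (gx n * gy n) a b c = (\<Sum>i\<le>a. 1 / real n ^ (i + 1) * (if a - i = 0 \<and> c = 0 then 1 / real n ^ (b + 1) else 0))"
    unfolding gx_def cf_pureX_mult gy_def cf_pureY ..
  also have "\<dots> = (\<Sum>i\<le>a. if i = a then (if c = 0 then 1 / real n ^ (a + 1) * (1 / real n ^ (b + 1)) else 0) else 0)"
    by (intro sum.cong refl) auto
  also have "\<dots> = (if c = 0 then 1 / real n ^ (a + 1) * (1 / real n ^ (b + 1)) else 0)"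
    by simp
  finally show ?thesis .
qed

definition cfB :: "nat \<Rightarrow> nat \<Rightarrow> nat \<Rightarrow> nat \<Rightarrow> real" where
  "cfB n a b c = (if a = 0 \<and> b = 0 \<and> c = 0 then 1 else 0)
      + (if c = 1 then 1 / real n ^ (a + 1) * (1 / real n ^ (b + 1)) else 0)
      - (if 1 \<le> a \<and> 1 \<le> b \<and> c = 0 then 1 / real n ^ a * (1 / real n ^ b) else 0)"

lemma cfB_Z: "cf (Z3 * (gx n * gy n)) a b c = (if c = 1 then 1 / real n ^ (a + 1) * (1 / real n ^ (b + 1)) else 0)"
proof (cases "c = 1")
  case True
  then show ?thesis by (simp add: cf_Z3_mult cf_gxgy)
next
  case False
  then show ?thesis by (cases c) (simp_all add: cf_Z3_mult cf_gxgy)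
qed

lemma cfB_XY: "cf (X3 * (Y3 * (gx n * gy n))) a b c = (if 1 \<le> a \<and> 1 \<le> b \<and> c = 0 then 1 / real n ^ a * (1 / real n ^ b) else 0)"
proof (cases "1 \<le> a \<and> 1 \<le> b")
  case True
  then show ?thesis by (cases a; cases b) (simp_all add: cf_X3_mult cf_Y3_mult cf_gxgy)
next
  case False
  then show ?thesis by (auto simp: cf_X3_mult cf_Y3_mult)
qed

lemma cf_Bn: "cf (Bn n) a b c = cfB n a b c"
proof -
  have "Bn n = 1 + Z3 * (gx n * gy n) - X3 * (Y3 * (gx n * gy n))"
    by (simp add: Bn_def algebra_simps)
  hence "cf (Bn n) a b c = cf 1 a b c + cf (Z3 * (gx n * gy n)) a b c - cf (X3 * (Y3 * (gx n * gy n))) a b c"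
    by simp
  also have "\<dots> = cfB n a b c"
    unfolding cfB_Z cfB_XY cfB_def cf_one ..
  finally show ?thesis .
qed

lemma Sw_Bn: "Sw (Bn n) = Bn n"
proof (rule F3_eqI)
  fix a b c
  have "cfB n b a c = cfB n a b c"
    unfolding cfB_def by (simp add: conj_ac mult.commute)
  thus "cf (Sw (Bn n)) a b c = cf (Bn n) a b c" by (simp add: Sw_def cf_Bn)
qed

lemma Sw_En: "Sw (En N) = En N"
  by (simp add: En_def Sw_prod Sw_Bn)

lemma Sc_Bn: "Sc (1 / real n) (Bn 1) = Bn n"
proof (rule F3_eqI)
  fix a b c
  have "(1 / real n) ^ (a + b + 2 * c) * cfB 1 a b c = cfB n a b c"
  proof (cases "c = 1")
    case True
    have "(1 / real n) ^ (a + b + 2 * c) = 1 / real n ^ (a + 1) * (1 / real n ^ (b + 1))"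
      unfolding True power_one_over[symmetric] power_add[symmetric] by simp
    thus ?thesis using True by (simp add: cfB_def)
  next
    case False
    show ?thesis
    proof (cases "c = 0")
      case True
      have "(1 / real n) ^ (a + b + 2 * c) = 1 / real n ^ a * (1 / real n ^ b)"
        unfolding True power_one_over[symmetric] power_add[symmetric] by simp
      thus ?thesis using True by (simp add: cfB_def)
    next
      case c0: False
      thus ?thesis using False by (simp add: cfB_def)
    qed
  qed
  thus "cf (Sc (1 / real n) (Bn 1)) a b c = cf (Bn n) a b c"
    by (simp add: Sc_def cf_Bn)
qed


lemma unit3:
  assumes "cf f 0 0 0 \<noteq> 0"
  shows "\<exists>g. f * g = 1"
proof -
  let ?p = "f $ 0 $ 0"
  have p0: "?p $ 0 \<noteq> 0" using assms by (simp add: cf_def)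
  have "inverse ?p * ?p = 1" using p0 by (rule inverse_mult_eq_1)
  hence p1: "?p * inverse ?p = 1" by (simp add: mult.commute)
  have q1: "f $ 0 * fps_right_inverse (f $ 0) (inverse ?p) = 1"
    by (rule fps_right_inverse) (use p1 in simp)
  have "f * fps_right_inverse f (fps_right_inverse (f $ 0) (inverse ?p)) = 1"
    by (rule fps_right_inverse) (use q1 in simp)
  thus ?thesis by blast
qed

definition R1 :: F3 where "R1 = (SOME g. Bn 1 * g = 1)"

lemma R1: "Bn 1 * R1 = 1"
proof -
  have "cf (Bn 1) 0 0 0 \<noteq> 0" by (simp add: cf_Bn cfB_def)
  from someI_ex[OF unit3[OF this]] show ?thesis by (simp add: R1_def)
qed

definition L1 :: F3 where "L1 = Dop (Bn 1) * R1"
definition Ln :: "nat \<Rightarrow> F3" where "Ln n = Sc (1 / real n) L1"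

lemma Dop_B1: "Dop (Bn 1) = Bn 1 * L1"
proof -
  have "Dop (Bn 1) = Dop (Bn 1) * (Bn 1 * R1)" by (simp only: R1 mult_1_right)
  thus ?thesis unfolding L1_def by (simp only: ac_simps)
qed

lemma Dop_Bn: "Dop (Bn n) = Bn n * Ln n"
proof -
  have "Dop (Bn n) = Dop (Sc (1 / real n) (Bn 1))" by (simp only: Sc_Bn)
  also have "\<dots> = Sc (1 / real n) (Bn 1 * L1)" by (simp only: Dop_Sc Dop_B1)
  also have "\<dots> = Bn n * Ln n" by (simp only: Sc_mult Sc_Bn Ln_def)
  finally show ?thesis .
qed

lemma Dop_one: "Dop 1 = 0"
  by (rule F3_eqI) (simp add: Dop_def cf_one)

lemma Dop_prod: "Dop (\<Prod>n\<in>S. Bn n) = (\<Prod>n\<in>S. Bn n) * (\<Sum>n\<in>S. Ln n)"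
proof (induction S rule: infinite_finite_induct)
  case (infinite A)
  then show ?case by (simp add: Dop_one)
next
  case empty
  then show ?case by (simp add: Dop_one)
next
  case (insert x F)
  then show ?case by (simp add: Dop_mult Dop_Bn algebra_simps)
qed

lemma cf_Ln: "cf (Ln n) a b c = cf L1 a b c * (1 / real n ^ (a + b + 2 * c))"
  by (simp add: Ln_def Sc_def power_one_over mult.commute)

lemma cf_SumLn: "cf (\<Sum>n\<in>{1..<N}. Ln n) p q r = cf L1 p q r * zetaN N (p + q + 2 * r)"
  by (simp add: cf_sum cf_Ln zetaN_def sum_distrib_left)

lemma En_rec:
  "real (a + b + 2 * c) * cf (En N) a b c =
   (\<Sum>i\<le>a. \<Sum>j\<le>b. \<Sum>k\<le>c. cf (En N) i j k *
       (cf L1 (a - i) (b - j) (c - k) * zetaN N ((a - i) + (b - j) + 2 * (c - k))))"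
proof -
  have "real (a + b + 2 * c) * cf (En N) a b c = cf (Dop (En N)) a b c" by (simp add: Dop_def)
  also have "Dop (En N) = En N * (\<Sum>n\<in>{1..<N}. Ln n)" unfolding En_def by (rule Dop_prod)
  also have "cf (En N * (\<Sum>n\<in>{1..<N}. Ln n)) a b c =
     (\<Sum>i\<le>a. \<Sum>j\<le>b. \<Sum>k\<le>c. cf (En N) i j k *
       (cf L1 (a - i) (b - j) (c - k) * zetaN N ((a - i) + (b - j) + 2 * (c - k))))"
    unfolding cf_mult cf_SumLn ..
  finally show ?thesis .
qed

definition Qc :: "F3 \<Rightarrow> bool" where "Qc f \<longleftrightarrow> (\<forall>a b c. cf f a b c \<in> \<rat>)"

lemma Qc_mult: "Qc f \<Longrightarrow> Qc g \<Longrightarrow> Qc (f * g)"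
  unfolding Qc_def cf_mult by (intro allI Rats_sum Rats_mult) auto

lemma Qc_Dop: "Qc f \<Longrightarrow> Qc (Dop f)"
  unfolding Qc_def Dop_def by (auto intro!: Rats_mult)

lemma Qc_B1: "Qc (Bn 1)"
  unfolding Qc_def cf_Bn cfB_def by auto

lemma sum3_split0:
  "(\<Sum>i\<le>(a::nat). \<Sum>j\<le>(b::nat). \<Sum>k\<le>(c::nat). F i j k) =
   F 0 0 0 + (\<Sum>i\<le>a. \<Sum>j\<le>b. \<Sum>k\<le>c. if i = 0 \<and> j = 0 \<and> k = 0 then 0 else (F i j k :: real))"
proof -
  have "(\<Sum>i\<le>a. \<Sum>j\<le>b. \<Sum>k\<le>c. F i j k) =
     (\<Sum>i\<le>a. \<Sum>j\<le>b. \<Sum>k\<le>c. (if i = 0 \<and> j = 0 \<and> k = 0 then F i j k else 0) + (if i = 0 \<and> j = 0 \<and> k = 0 then 0 else F i j k))"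
    by (intro sum.cong refl) auto
  also have "\<dots> = (\<Sum>i\<le>a. \<Sum>j\<le>b. \<Sum>k\<le>c. (if i = 0 \<and> j = 0 \<and> k = 0 then F i j k else 0)) +
      (\<Sum>i\<le>a. \<Sum>j\<le>b. \<Sum>k\<le>c. if i = 0 \<and> j = 0 \<and> k = 0 then 0 else F i j k)"
    by (simp add: sum.distrib)
  also have "(\<Sum>i\<le>a. \<Sum>j\<le>b. \<Sum>k\<le>c. (if i = 0 \<and> j = 0 \<and> k = 0 then F i j k else 0)) = F 0 0 0"
    by (subst sum3_delta) simp
  finally show ?thesis .
qed

lemma Qc_R1: "Qc R1"
proof -
  have "cf R1 a b c \<in> \<rat>" if "a + b + c = n" for n a b c
    using that
  proof (induction n arbitrary: a b c rule: less_induct)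
    case (less n)
    have e: "cf (Bn 1 * R1) a b c = cf 1 a b c" by (simp only: R1)
    have "cf (Bn 1 * R1) a b c = cf (Bn 1) 0 0 0 * cf R1 a b c +
       (\<Sum>i\<le>a. \<Sum>j\<le>b. \<Sum>k\<le>c. if i = 0 \<and> j = 0 \<and> k = 0 then 0 else cf (Bn 1) i j k * cf R1 (a - i) (b - j) (c - k))"
      unfolding cf_mult by (subst sum3_split0) simp
    also have "cf (Bn 1) 0 0 0 = 1" by (simp add: cf_Bn cfB_def)
    finally have "cf R1 a b c = cf 1 a b c -
       (\<Sum>i\<le>a. \<Sum>j\<le>b. \<Sum>k\<le>c. if i = 0 \<and> j = 0 \<and> k = 0 then 0 else cf (Bn 1) i j k * cf R1 (a - i) (b - j) (c - k))"
      using e by simp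
    also have "\<dots> \<in> \<rat>"
    proof (intro Rats_diff Rats_sum)
      show "cf 1 a b c \<in> \<rat>" by (simp add: cf_one)
    next
      fix i j k assume ijk: "i \<in> {..a}" "j \<in> {..b}" "k \<in> {..c}"
      show "(if i = 0 \<and> j = 0 \<and> k = 0 then 0 else cf (Bn 1) i j k * cf R1 (a - i) (b - j) (c - k)) \<in> \<rat>"
      proof (cases "i = 0 \<and> j = 0 \<and> k = 0")
        case False
        hence "(a - i) + (b - j) + (c - k) < n" using ijk less.prems by auto
        hence "cf R1 (a - i) (b - j) (c - k) \<in> \<rat>" using less.IH by blast
        moreover have "cf (Bn 1) i j k \<in> \<rat>" using Qc_B1 by (simp add: Qc_def)
        ultimately show ?thesis using False by simp
      qed simp
    qed
    finally show ?case .
  qed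
  thus ?thesis unfolding Qc_def by blast
qed

lemma Qc_L1: "Qc L1"
  unfolding L1_def by (intro Qc_mult Qc_Dop Qc_B1 Qc_R1)

lemma L1_low:
  assumes "a + b + 2 * c \<le> 1"
  shows "cf L1 a b c = 0"
proof -
  have "cf (Dop (Bn 1)) i j k = 0" if "i \<le> a" "j \<le> b" "k \<le> c" for i j k
  proof -
    have w: "i + j + 2 * k \<le> 1" using that assms by linarith
    show ?thesis
    proof (cases "i + j + 2 * k = 0")
      case True
      then show ?thesis by (simp add: Dop_def)
    next
      case False
      hence "k = 0" "(i = 1 \<and> j = 0) \<or> (i = 0 \<and> j = 1)" using w by auto
      then show ?thesis by (auto simp: Dop_def cf_Bn cfB_def)
    qed
  qed
  thus ?thesis unfolding L1_def cf_mult by (simp add: sum.neutral)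
qed


lemma cf_mult0: "cf (f * g) 0 0 0 = cf f 0 0 0 * cf g 0 0 0"
  by (simp add: cf_mult)

lemma cf_prod0: "cf (prod f S) 0 0 0 = (\<Prod>s\<in>S. cf (f s) 0 0 0)"
  by (induction S rule: infinite_finite_induct) (auto simp: cf_one cf_mult0)

lemma En_000: "cf (En N) 0 0 0 = 1"
  unfolding En_def cf_prod0 by (simp add: cf_Bn cfB_def)

lemma WH_En_aux: "\<forall>a b c. a + b + 2 * c = w \<longrightarrow> WH w (\<lambda>N. cf (En N) a b c)"
proof (induction w rule: less_induct)
  case (less w)
  show ?case
  proof (intro allI impI)
    fix a b c assume wdef: "a + b + 2 * c = w"
    show "WH w (\<lambda>N. cf (En N) a b c)"
    proof (cases "w = 0")
      case True
      hence "a = 0" "b = 0" "c = 0" using wdef by auto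
      thus ?thesis using True WH_one by (simp add: En_000)
    next
      case False
      define T where "T i j k N = cf (En N) i j k * (cf L1 (a - i) (b - j) (c - k) * zetaN N ((a - i) + (b - j) + 2 * (c - k)))"
        for i j k N
      have each: "WH w (T i j k)" if ijk: "i \<le> a" "j \<le> b" "k \<le> c" for i j k
      proof (cases "(a - i) + (b - j) + 2 * (c - k) \<le> 1")
        case True
        hence "T i j k = (\<lambda>N. 0)" by (intro ext) (simp add: T_def L1_low)
        thus ?thesis by (simp add: WH_zero)
      next
        case False
        define w' where "w' = (a - i) + (b - j) + 2 * (c - k)"
        have w'2: "2 \<le> w'" using False by (simp add: w'_def)
        have ww: "(i + j + 2 * k) + w' = w" using ijk wdef by (simp add: w'_def)
        have lt: "i + j + 2 * k < w" using ww w'2 by linarith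
        have IH: "WH (i + j + 2 * k) (\<lambda>N. cf (En N) i j k)" using less.IH[OF lt] by blast
        have Z: "WH w' (\<lambda>N. cf L1 (a - i) (b - j) (c - k) * zetaN N w')"
          using Qc_L1 by (intro WH_Rats_scale WH_zeta w'2) (simp add: Qc_def)
        have W: "WH ((i + j + 2 * k) + w') (\<lambda>N. cf (En N) i j k * (cf L1 (a - i) (b - j) (c - k) * zetaN N w'))"
          by (rule WH_mult[OF IH Z])
        have "T i j k = (\<lambda>N. cf (En N) i j k * (cf L1 (a - i) (b - j) (c - k) * zetaN N w'))"
          by (intro ext) (simp add: T_def w'_def)
        thus ?thesis using W unfolding ww by simp
      qed
      have S: "WH w (\<lambda>N. \<Sum>i\<le>a. \<Sum>j\<le>b. \<Sum>k\<le>c. T i j k N)"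
        using each by (intro WH_sum) auto
      have S': "WH w (\<lambda>N. (1 / real w) * (\<Sum>i\<le>a. \<Sum>j\<le>b. \<Sum>k\<le>c. T i j k N))"
        by (rule WH_Rats_scale[OF _ S]) simp
      show ?thesis
      proof (rule WH_cong[OF S'])
        fix N :: nat
        have "real w * cf (En N) a b c = (\<Sum>i\<le>a. \<Sum>j\<le>b. \<Sum>k\<le>c. T i j k N)"
          unfolding T_def using En_rec[of a b c N] wdef by simp
        thus "cf (En N) a b c = 1 / real w * (\<Sum>i\<le>a. \<Sum>j\<le>b. \<Sum>k\<le>c. T i j k N)"
          using False by (simp add: field_simps)
      qed
    qed
  qed
qed

lemma WH_En: "WH (a + b + 2 * c) (\<lambda>N. cf (En N) a b c)"
  using WH_En_aux by blast

lemma En_Gen: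
  assumes "N \<ge> 1"
  shows "cf (En N) (a + 1) (b + 1) c = (if 1 \<le> c then cf (Gen N) (a + 1) (b + 1) (c - 1) else 0) - cf (Gen N) a b c"
proof -
  have "En N = 1 + Z3 * Gen N - X3 * (Y3 * Gen N)"
    using main_identity[OF assms] by (simp add: algebra_simps)
  hence "cf (En N) (a + 1) (b + 1) c = cf 1 (a + 1) (b + 1) c + cf (Z3 * Gen N) (a + 1) (b + 1) c - cf (X3 * (Y3 * Gen N)) (a + 1) (b + 1) c"
    by simp
  thus ?thesis by (simp add: cf_one cf_Z3_mult cf_X3_mult cf_Y3_mult)
qed

lemma Gen_En:
  assumes "N \<ge> 1"
  shows "cf (Gen N) a b c = - (\<Sum>i\<le>c. cf (En N) (a + 1 + i) (b + 1 + i) (c - i))"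
proof (induction c arbitrary: a b)
  case 0
  then show ?case using En_Gen[OF assms, of a b 0] by simp
next
  case (Suc c)
  have "cf (Gen N) a b (Suc c) = cf (Gen N) (a + 1) (b + 1) c - cf (En N) (a + 1) (b + 1) (Suc c)"
    using En_Gen[OF assms, of a b "Suc c"] by simp
  also have "\<dots> = - (\<Sum>i\<le>c. cf (En N) (a + 1 + 1 + i) (b + 1 + 1 + i) (c - i)) - cf (En N) (a + 1) (b + 1) (Suc c)"
    using Suc.IH[of "a + 1" "b + 1"] by simp
  also have "\<dots> = - (\<Sum>i\<le>Suc c. cf (En N) (a + 1 + i) (b + 1 + i) (Suc c - i))"
    by (subst sum.atMost_Suc_shift) (simp add: add.assoc)
  finally show ?case .
qed

lemma En_sym: "cf (En N) a b c = cf (En N) b a c"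
proof -
  have "cf (Sw (En N)) b a c = cf (En N) b a c" by (simp add: Sw_En)
  thus ?thesis by (simp add: Sw_def)
qed

lemma Gen_sym:
  assumes "N \<ge> 1"
  shows "cf (Gen N) a b c = cf (Gen N) b a c"
proof -
  have "(\<Sum>i\<le>c. cf (En N) (a + 1 + i) (b + 1 + i) (c - i)) = (\<Sum>i\<le>c. cf (En N) (b + 1 + i) (a + 1 + i) (c - i))"
    by (rule sum.cong[OF refl]) (rule En_sym)
  thus ?thesis by (simp only: Gen_En[OF assms])
qed

definition valid :: "nat \<Rightarrow> nat \<Rightarrow> nat \<Rightarrow> bool" where
  "valid k q h \<longleftrightarrow> 1 \<le> h \<and> h \<le> q \<and> q + h \<le> k"

lemma S0_zero: "\<not> valid k q h \<Longrightarrow> S0 N k q h = 0"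
proof -
  assume nv: "\<not> valid k q h"
  have "I0 k q h = {}"
  proof (rule ccontr)
    assume "I0 k q h \<noteq> {}"
    then obtain p where "p \<in> I0 k q h" by blast
    then obtain ks l where "(ks, l) \<in> I0 k q h" by (cases p) auto
    thus False using I0_nonempty nv unfolding valid_def by blast
  qed
  thus ?thesis by (simp add: S0_def)
qed

lemma S0_Gen:
  assumes "valid k q h"
  shows "S0 N k q h = cf (Gen N) (k - q - h) (q - h) (h - 1)"
proof -
  define a where "a = k - q - h"
  define b where "b = q - h"
  define c where "c = h - 1"
  have e: "k = a + b + 2 * c + 2" "q = b + c + 1" "h = c + 1"
    using assms unfolding valid_def a_def b_def c_def by auto
  have "S0 N k q h = cf (Gen N) a b c"
    unfolding e(1) e(2) e(3) by (rule Gen_cf[symmetric])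
  thus ?thesis by (simp add: a_def b_def c_def)
qed

theorem corollary5p5:
  shows "(\<forall>k q h :: nat. k > 0 \<and> q > 0 \<and> h > 0 \<longrightarrow>
            (\<exists>c :: (nat \<Rightarrow> nat) \<Rightarrow> rat. \<forall>N :: nat. N > 0 \<longrightarrow>
               S0 N k q h = eval_whpoly k c (\<lambda>j. zetaN N j)))
       \<and> (\<forall>N k q h :: nat. N > 0 \<and> k > 0 \<and> q > 0 \<and> h > 0 \<longrightarrow>
               S0 N k q h = S0 N k (k - q) h)"
proof (intro conjI allI impI)
  fix k q h :: nat
  assume "k > 0 \<and> q > 0 \<and> h > 0"
  have "WH k (\<lambda>N. S0 N k q h)"
  proof (cases "valid k q h")
    case True
    define a where "a = k - q - h"
    define b where "b = q - h"
    define c where "c = h - 1"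
    have kk: "k = a + b + 2 * c + 2" using True unfolding valid_def a_def b_def c_def by arith
    have "WH k (\<lambda>N. - (\<Sum>i\<le>c. cf (En N) (a + 1 + i) (b + 1 + i) (c - i)))"
    proof (intro WH_neg WH_sum)
      fix i assume "i \<in> {..c}"
      hence "i \<le> c" by simp
      hence "(a + 1 + i) + (b + 1 + i) + 2 * (c - i) = k" using kk by arith
      thus "WH k (\<lambda>N. cf (En N) (a + 1 + i) (b + 1 + i) (c - i))"
        using WH_En[of "a + 1 + i" "b + 1 + i" "c - i"] by simp
    qed
    thus ?thesis
    proof (rule WH_cong)
      fix N :: nat assume "N > 0"
      thus "S0 N k q h = - (\<Sum>i\<le>c. cf (En N) (a + 1 + i) (b + 1 + i) (c - i))"
        using S0_Gen[OF True, of N] Gen_En[of N a b c] unfolding a_def b_def c_def by simp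
    qed
  next
    case False
    have "(\<lambda>N. S0 N k q h) = (\<lambda>N. 0)" by (intro ext) (simp add: S0_zero[OF False])
    thus ?thesis by (simp add: WH_zero)
  qed
  thus "\<exists>c :: (nat \<Rightarrow> nat) \<Rightarrow> rat. \<forall>N :: nat. N > 0 \<longrightarrow> S0 N k q h = eval_whpoly k c (\<lambda>j. zetaN N j)"
    unfolding WH_def .
next
  fix N k q h :: nat
  assume A: "N > 0 \<and> k > 0 \<and> q > 0 \<and> h > 0"
  show "S0 N k q h = S0 N k (k - q) h"
  proof (cases "valid k q h")
    case True
    have True': "valid k (k - q) h" using True unfolding valid_def by arith
    have e1: "k - (k - q) - h = q - h" using True unfolding valid_def by arith
    have N1: "N \<ge> 1" using A by simp
    show ?thesis
      unfolding S0_Gen[OF True] S0_Gen[OF True'] e1 by (rule Gen_sym[OF N1])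
  next
    case False
    have False': "\<not> valid k (k - q) h" using False A unfolding valid_def by arith
    show ?thesis using S0_zero[OF False] S0_zero[OF False'] by simp
  qed
qed


end
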